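(* Let $\mathcal{A}$ be an abelian category and $n\ge1$. Suppose given objects $A^k$ ($0\le k\le n+1$) and $B_k^l$ ($0\le k\le n+1$, $1\le l\le n$), with the convention $B_k^0=A^k$, and morphisms $f^k:A^k\to A^{k+1}$ ($0\le k\le n$), $g_k^l:B_k^l\to B_k^{l-1}$ ($1\le l\le n$), $p_k^l:B_k^l\to B_{k+1}^{l+1}$ ($0\le k\le n$, $0\le l\le n-1$; write $p^k=p_k^0$), satisfying $f^k=g_{k+1}^1p^k$, $g_{k+1}^{l+1}p_k^l=p_k^{l-1}g_k^l$ for $1\le l\le n-1$, and $p_k^{n-1}g_k^n=0$. Assume: (a) the sequence $0\to B_{n+1}^n\xrightarrow{g_{n+1}^n}\cdots\xrightarrow{g_{n+1}^2}B_{n+1}^1\xrightarrow{g_{n+1}^1}A^{n+1}\to0$ is exact; (b) for every $k\in\{0,\dots,n\}$, the mapping cone of the morphism of complexes from $B_k^n\to B_k^{n-1}\to\cdots\to B_k^1\to A^k$ to $0\to B_{k+1}^n\to\cdots\to B_{k+1}^2\to B_{k+1}^1$ given by the components $0,p_k^{n-1},\dots,p_k^1,p^k$, i.e. the complex $B_k^n\to B_k^{n-1}\oplus 0\to B_k^{n-2}\oplus B_{k+1}^n\to\cdots\to A^k\oplus B_{k+1}^2\to B_{k+1}^1$, is exact at every term except possibly the last, and its first morphism is a monomorphism. Then the sequence $A^0\xrightarrow{f^0}A^1\to\cdots\xrightarrow{f^n}A^{n+1}\to0$ is exact if and only if for every $k\in\{0,\dots,n\}$ the morphism $[p^k,\ g_{k+1}^2]:A^k\oplus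 B_{k+1}^2\to B_{k+1}^1$ is an epimorphism (with $B_{k+1}^2:=0$ if $n=1$).
   Context: The mapping cone of a morphism of complexes $(h^0,\dots,h^n)$ from $X^0\xrightarrow{d_X^0}\cdots\to X^n$ to $Y^0\xrightarrow{d_Y^0}\cdots\to Y^n$ is the complex $X^0\to X^1\oplus Y^0\to\cdots\to X^n\oplus Y^{n-1}\to Y^n$ with differentials $\begin{pmatrix}-d_X^k&0\\ h^k&d_Y^{k-1}\end{pmatrix}$ (with $d_X^n=0$, $d_Y^{-1}=0$). *)

theory Defs
  imports Main
begin

text \<open>A category with objects of type 'o and morphisms of type 'm, given by
  domain/codomain maps, composition (ccomp C g f = g after f) and identities,
  together with preadditive data: addition, negation and zero morphisms.\<close>

record ('o, 'm) cat =
  Ob    :: "'o set"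
  Mor   :: "'m set"
  cdom  :: "'m \<Rightarrow> 'o"
  ccod  :: "'m \<Rightarrow> 'o"
  ccomp :: "'m \<Rightarrow> 'm \<Rightarrow> 'm"
  cid   :: "'o \<Rightarrow> 'm"
  madd  :: "'m \<Rightarrow> 'm \<Rightarrow> 'm"
  mneg  :: "'m \<Rightarrow> 'm"
  zer   :: "'o \<Rightarrow> 'o \<Rightarrow> 'm"

definition hom :: "('o, 'm) cat \<Rightarrow> 'o \<Rightarrow> 'o \<Rightarrow> 'm set" where
  "hom C X Y = {f \<in> Mor C. cdom C f = X \<and> ccod C f = Y}"

definition category :: "('o, 'm) cat \<Rightarrow> bool" where
  "category C \<longleftrightarrow>
     (\<forall>f\<in>Mor C. cdom C f \<in> Ob C \<and> ccod C f \<in> Ob C) \<and>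
     (\<forall>X\<in>Ob C. cid C X \<in> hom C X X) \<and>
     (\<forall>X Y Z f g. f \<in> hom C X Y \<longrightarrow> g \<in> hom C Y Z \<longrightarrow> ccomp C g f \<in> hom C X Z) \<and>
     (\<forall>W X Y Z f g h. f \<in> hom C W X \<longrightarrow> g \<in> hom C X Y \<longrightarrow> h \<in> hom C Y Z \<longrightarrow>
        ccomp C h (ccomp C g f) = ccomp C (ccomp C h g) f) \<and>
     (\<forall>X Y f. f \<in> hom C X Y \<longrightarrow> ccomp C (cid C Y) f = f \<and> ccomp C f (cid C X) = f)"

definition preadditive :: "('o, 'm) cat \<Rightarrow> bool" where
  "preadditive C \<longleftrightarrow> category C \<and>
     (\<forall>X\<in>Ob C. \<forall>Y\<in>Ob C.
        zer C X Y \<in> hom C X Y \<and>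
        (\<forall>f\<in>hom C X Y. \<forall>g\<in>hom C X Y. madd C f g \<in> hom C X Y) \<and>
        (\<forall>f\<in>hom C X Y. mneg C f \<in> hom C X Y) \<and>
        (\<forall>f\<in>hom C X Y. \<forall>g\<in>hom C X Y. \<forall>h\<in>hom C X Y.
            madd C (madd C f g) h = madd C f (madd C g h)) \<and>
        (\<forall>f\<in>hom C X Y. \<forall>g\<in>hom C X Y. madd C f g = madd C g f) \<and>
        (\<forall>f\<in>hom C X Y. madd C f (zer C X Y) = f) \<and>
        (\<forall>f\<in>hom C X Y. madd C f (mneg C f) = zer C X Y)) \<and>
     (\<forall>X Y Z f g h. f \<in> hom C X Y \<longrightarrow> g \<in> hom C X Y \<longrightarrow> h \<in> hom C Y Z \<longrightarrow>
        ccomp C h (madd C f g) = madd C (ccomp C h f) (ccomp C h g)) \<and>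
     (\<forall>X Y Z f g h. f \<in> hom C X Y \<longrightarrow> g \<in> hom C Y Z \<longrightarrow> h \<in> hom C Y Z \<longrightarrow>
        ccomp C (madd C g h) f = madd C (ccomp C g f) (ccomp C h f))"

definition is_zero_obj :: "('o, 'm) cat \<Rightarrow> 'o \<Rightarrow> bool" where
  "is_zero_obj C Z \<longleftrightarrow> Z \<in> Ob C \<and>
     (\<forall>X\<in>Ob C. (\<exists>!u. u \<in> hom C Z X) \<and> (\<exists>!u. u \<in> hom C X Z))"

definition is_biproduct ::
  "('o, 'm) cat \<Rightarrow> 'o \<Rightarrow> 'o \<Rightarrow> 'o \<Rightarrow> 'm \<Rightarrow> 'm \<Rightarrow> 'm \<Rightarrow> 'm \<Rightarrow> bool" where
  "is_biproduct C X Y S i1 i2 p1 p2 \<longleftrightarrow> S \<in> Ob C \<and>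
     i1 \<in> hom C X S \<and> i2 \<in> hom C Y S \<and> p1 \<in> hom C S X \<and> p2 \<in> hom C S Y \<and>
     ccomp C p1 i1 = cid C X \<and> ccomp C p2 i2 = cid C Y \<and>
     ccomp C p2 i1 = zer C X Y \<and> ccomp C p1 i2 = zer C Y X \<and>
     madd C (ccomp C i1 p1) (ccomp C i2 p2) = cid C S"

definition is_kernel :: "('o, 'm) cat \<Rightarrow> 'm \<Rightarrow> 'm \<Rightarrow> bool" where
  "is_kernel C f k \<longleftrightarrow> f \<in> Mor C \<and> k \<in> Mor C \<and> ccod C k = cdom C f \<and>
     ccomp C f k = zer C (cdom C k) (ccod C f) \<and>
     (\<forall>h\<in>Mor C. ccod C h = cdom C f \<and> ccomp C f h = zer C (cdom C h) (ccod C f) \<longrightarrow>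
        (\<exists>!u. u \<in> hom C (cdom C h) (cdom C k) \<and> ccomp C k u = h))"

definition is_cokernel :: "('o, 'm) cat \<Rightarrow> 'm \<Rightarrow> 'm \<Rightarrow> bool" where
  "is_cokernel C f c \<longleftrightarrow> f \<in> Mor C \<and> c \<in> Mor C \<and> cdom C c = ccod C f \<and>
     ccomp C c f = zer C (cdom C f) (ccod C c) \<and>
     (\<forall>h\<in>Mor C. cdom C h = ccod C f \<and> ccomp C h f = zer C (cdom C f) (ccod C h) \<longrightarrow>
        (\<exists>!u. u \<in> hom C (ccod C c) (ccod C h) \<and> ccomp C u c = h))"

definition is_mono :: "('o, 'm) cat \<Rightarrow> 'm \<Rightarrow> bool" where
  "is_mono C m \<longleftrightarrow> m \<in> Mor C \<and>
     (\<forall>a b. a \<in> Mor C \<and> b \<in> Mor C \<and> cdom C a = cdom C b \<and>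
        ccod C a = cdom C m \<and> ccod C b = cdom C m \<and> ccomp C m a = ccomp C m b \<longrightarrow> a = b)"

definition is_epi :: "('o, 'm) cat \<Rightarrow> 'm \<Rightarrow> bool" where
  "is_epi C e \<longleftrightarrow> e \<in> Mor C \<and>
     (\<forall>a b. a \<in> Mor C \<and> b \<in> Mor C \<and> ccod C a = ccod C b \<and>
        cdom C a = ccod C e \<and> cdom C b = ccod C e \<and> ccomp C a e = ccomp C b e \<longrightarrow> a = b)"

definition abelian_category :: "('o, 'm) cat \<Rightarrow> bool" where
  "abelian_category C \<longleftrightarrow> preadditive C \<and>
     (\<exists>Z. is_zero_obj C Z) \<and>
     (\<forall>X\<in>Ob C. \<forall>Y\<in>Ob C. \<exists>S i1 i2 p1 p2. is_biproduct C X Y S i1 i2 p1 p2) \<and>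
     (\<forall>f\<in>Mor C. \<exists>k. is_kernel C f k) \<and>
     (\<forall>f\<in>Mor C. \<exists>c. is_cokernel C f c) \<and>
     (\<forall>m. is_mono C m \<longrightarrow> (\<exists>f. is_kernel C f m)) \<and>
     (\<forall>e. is_epi C e \<longrightarrow> (\<exists>f. is_cokernel C f e))"

text \<open>Exactness at the middle object of  . -f-> . -g-> . : the image of f
  (a kernel of a cokernel of f) and a kernel of g are the same subobject.\<close>

definition exact :: "('o, 'm) cat \<Rightarrow> 'm \<Rightarrow> 'm \<Rightarrow> bool" where
  "exact C f g \<longleftrightarrow> f \<in> Mor C \<and> g \<in> Mor C \<and> ccod C f = cdom C g \<and>
     (\<forall>c m k. is_cokernel C f c \<and> is_kernel C c m \<and> is_kernel C g k \<longrightarrow>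
        (\<exists>u v. u \<in> hom C (cdom C k) (cdom C m) \<and> v \<in> hom C (cdom C m) (cdom C k) \<and>
               ccomp C m u = k \<and> ccomp C k v = m))"

definition zobj :: "('o, 'm) cat \<Rightarrow> 'o" where
  "zobj C = (SOME Z. is_zero_obj C Z)"

definition bsum_data :: "('o, 'm) cat \<Rightarrow> 'o \<Rightarrow> 'o \<Rightarrow> 'o \<times> 'm \<times> 'm \<times> 'm \<times> 'm" where
  "bsum_data C X Y = (SOME t. case t of (S, i1, i2, p1, p2) \<Rightarrow> is_biproduct C X Y S i1 i2 p1 p2)"

definition bobj :: "('o, 'm) cat \<Rightarrow> 'o \<Rightarrow> 'o \<Rightarrow> 'o" where
  "bobj C X Y = fst (bsum_data C X Y)"
definition binj1 :: "('o, 'm) cat \<Rightarrow> 'o \<Rightarrow> 'o \<Rightarrow> 'm" where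
  "binj1 C X Y = fst (snd (bsum_data C X Y))"
definition binj2 :: "('o, 'm) cat \<Rightarrow> 'o \<Rightarrow> 'o \<Rightarrow> 'm" where
  "binj2 C X Y = fst (snd (snd (bsum_data C X Y)))"
definition bprj1 :: "('o, 'm) cat \<Rightarrow> 'o \<Rightarrow> 'o \<Rightarrow> 'm" where
  "bprj1 C X Y = fst (snd (snd (snd (bsum_data C X Y))))"
definition bprj2 :: "('o, 'm) cat \<Rightarrow> 'o \<Rightarrow> 'o \<Rightarrow> 'm" where
  "bprj2 C X Y = snd (snd (snd (snd (bsum_data C X Y))))"

text \<open>col C Y1 Y2 a b : X \<rightarrow> Y1 \<oplus> Y2 is the column (a; b);
  row C X1 X2 a b : X1 \<oplus> X2 \<rightarrow> Y is the row [a, b];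
  mat C X1 X2 Y1 Y2 a b c d : X1 \<oplus> X2 \<rightarrow> Y1 \<oplus> Y2 is the matrix ((a, b), (c, d)).\<close>

definition col :: "('o, 'm) cat \<Rightarrow> 'o \<Rightarrow> 'o \<Rightarrow> 'm \<Rightarrow> 'm \<Rightarrow> 'm" where
  "col C Y1 Y2 a b = madd C (ccomp C (binj1 C Y1 Y2) a) (ccomp C (binj2 C Y1 Y2) b)"

definition row :: "('o, 'm) cat \<Rightarrow> 'o \<Rightarrow> 'o \<Rightarrow> 'm \<Rightarrow> 'm \<Rightarrow> 'm" where
  "row C X1 X2 a b = madd C (ccomp C a (bprj1 C X1 X2)) (ccomp C b (bprj2 C X1 X2))"

definition mat :: "('o, 'm) cat \<Rightarrow> 'o \<Rightarrow> 'o \<Rightarrow> 'o \<Rightarrow> 'o \<Rightarrow> 'm \<Rightarrow> 'm \<Rightarrow> 'm \<Rightarrow> 'm \<Rightarrow> 'm" where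
  "mat C X1 X2 Y1 Y2 a b c d =
     madd C (ccomp C (col C Y1 Y2 a c) (bprj1 C X1 X2)) (ccomp C (col C Y1 Y2 b d) (bprj2 C X1 X2))"

text \<open>Cone: X^0 \<rightarrow> X^1 \<oplus> Y^0 \<rightarrow> \<dots> \<rightarrow> X^n \<oplus> Y^(n-1) \<rightarrow> Y^n; cone_d C n X Y dX dY h j
  is the differential out of the j-th term (0 \<le> j \<le> n), with matrix
  ((-dX^j, 0), (h^j, dY^(j-1))), where dX^n = 0 and dY^(-1) = 0 (assumes n \<ge> 1).\<close>

definition cone_d :: "('o, 'm) cat \<Rightarrow> nat \<Rightarrow> (nat \<Rightarrow> 'o) \<Rightarrow> (nat \<Rightarrow> 'o) \<Rightarrow>
    (nat \<Rightarrow> 'm) \<Rightarrow> (nat \<Rightarrow> 'm) \<Rightarrow> (nat \<Rightarrow> 'm) \<Rightarrow> nat \<Rightarrow> 'm" where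
  "cone_d C n X Y dX dY h j =
     (if j = 0 then col C (X 1) (Y 0) (mneg C (dX 0)) (h 0)
      else if j < n then
        mat C (X j) (Y (j - 1)) (X (Suc j)) (Y j)
          (mneg C (dX j)) (zer C (Y (j - 1)) (X (Suc j))) (h j) (dY (j - 1))
      else row C (X n) (Y (n - 1)) (h n) (dY (n - 1)))"

end

theory Submission
  imports Defs
begin

locale ab =
  fixes C :: "('o, 'm) cat"
  assumes abel: "abelian_category C"
begin

lemma pre: "preadditive C" using abel unfolding abelian_category_def by (elim conjE)
lemma cat: "category C" using pre unfolding preadditive_def by (elim conjE)

lemma cat_parts_1: "\<forall>f\<in>Mor C. cdom C f \<in> Ob C \<and> ccod C f \<in> Ob C"
  using cat unfolding category_def by argo
lemma cat_parts_2: "\<forall>X\<in>Ob C. cid C X \<in> hom C X X"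
  using cat unfolding category_def by argo
lemma cat_parts_3: "\<forall>X Y Z f g. f \<in> hom C X Y \<longrightarrow> g \<in> hom C Y Z \<longrightarrow> ccomp C g f \<in> hom C X Z"
  using cat unfolding category_def by argo
lemma cat_parts_4: "\<forall>W X Y Z f g h. f \<in> hom C W X \<longrightarrow> g \<in> hom C X Y \<longrightarrow> h \<in> hom C Y Z \<longrightarrow>
        ccomp C h (ccomp C g f) = ccomp C (ccomp C h g) f"
  using cat unfolding category_def by argo
lemma cat_parts_5: "\<forall>X Y f. f \<in> hom C X Y \<longrightarrow> ccomp C (cid C Y) f = f \<and> ccomp C f (cid C X) = f"
  using cat unfolding category_def by argo
lemmas cat_parts = cat_parts_1 cat_parts_2 cat_parts_3 cat_parts_4 cat_parts_5

lemma hom_iff: "f \<in> hom C X Y \<longleftrightarrow> f \<in> Mor C \<and> cdom C f = X \<and> ccod C f = Y"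
  by (simp add: hom_def)

lemma homI: "f \<in> Mor C \<Longrightarrow> f \<in> hom C (cdom C f) (ccod C f)"
  by (simp add: hom_def)

lemma hom_ob1: "f \<in> hom C X Y \<Longrightarrow> X \<in> Ob C"
  using cat_parts(1) unfolding hom_def by auto
lemma hom_ob2: "f \<in> hom C X Y \<Longrightarrow> Y \<in> Ob C"
  using cat_parts(1) unfolding hom_def by auto

lemma comp_hom[intro]: "f \<in> hom C X Y \<Longrightarrow> g \<in> hom C Y Z \<Longrightarrow> ccomp C g f \<in> hom C X Z"
  using cat_parts(3) by blast

lemma assoc: "f \<in> hom C W X \<Longrightarrow> g \<in> hom C X Y \<Longrightarrow> h \<in> hom C Y Z \<Longrightarrow>
   ccomp C (ccomp C h g) f = ccomp C h (ccomp C g f)"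
  using cat_parts(4) by metis

lemma id_hom[intro]: "X \<in> Ob C \<Longrightarrow> cid C X \<in> hom C X X"
  using cat_parts(2) by blast

lemma id_l: "f \<in> hom C X Y \<Longrightarrow> ccomp C (cid C Y) f = f"
  using cat_parts(5) by blast
lemma id_r: "f \<in> hom C X Y \<Longrightarrow> ccomp C f (cid C X) = f"
  using cat_parts(5) by blast

lemma pre_parts_1: "\<forall>X\<in>Ob C. \<forall>Y\<in>Ob C.
        zer C X Y \<in> hom C X Y \<and>
        (\<forall>f\<in>hom C X Y. \<forall>g\<in>hom C X Y. madd C f g \<in> hom C X Y) \<and>
        (\<forall>f\<in>hom C X Y. mneg C f \<in> hom C X Y) \<and>
        (\<forall>f\<in>hom C X Y. \<forall>g\<in>hom C X Y. \<forall>h\<in>hom C X Y.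
            madd C (madd C f g) h = madd C f (madd C g h)) \<and>
        (\<forall>f\<in>hom C X Y. \<forall>g\<in>hom C X Y. madd C f g = madd C g f) \<and>
        (\<forall>f\<in>hom C X Y. madd C f (zer C X Y) = f) \<and>
        (\<forall>f\<in>hom C X Y. madd C f (mneg C f) = zer C X Y)"
  using pre unfolding preadditive_def by argo
lemma pre_parts_2: "\<forall>X Y Z f g h. f \<in> hom C X Y \<longrightarrow> g \<in> hom C X Y \<longrightarrow> h \<in> hom C Y Z \<longrightarrow>
        ccomp C h (madd C f g) = madd C (ccomp C h f) (ccomp C h g)"
  using pre unfolding preadditive_def by argo
lemma pre_parts_3: "\<forall>X Y Z f g h. f \<in> hom C X Y \<longrightarrow> g \<in> hom C Y Z \<longrightarrow> h \<in> hom C Y Z \<longrightarrow>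
        ccomp C (madd C g h) f = madd C (ccomp C g f) (ccomp C h f)"
  using pre unfolding preadditive_def by argo
lemmas pre_parts = pre_parts_1 pre_parts_2 pre_parts_3

lemma grp: assumes "X \<in> Ob C" "Y \<in> Ob C" shows
  "zer C X Y \<in> hom C X Y"
  "(\<forall>f\<in>hom C X Y. \<forall>g\<in>hom C X Y. madd C f g \<in> hom C X Y)"
  "(\<forall>f\<in>hom C X Y. mneg C f \<in> hom C X Y)"
  "(\<forall>f\<in>hom C X Y. \<forall>g\<in>hom C X Y. \<forall>h\<in>hom C X Y.
            madd C (madd C f g) h = madd C f (madd C g h))"
  "(\<forall>f\<in>hom C X Y. \<forall>g\<in>hom C X Y. madd C f g = madd C g f)"
  "(\<forall>f\<in>hom C X Y. madd C f (zer C X Y) = f)"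
  "(\<forall>f\<in>hom C X Y. madd C f (mneg C f) = zer C X Y)"
  using pre_parts(1) assms by blast+

lemma zer_hom[intro]: "X \<in> Ob C \<Longrightarrow> Y \<in> Ob C \<Longrightarrow> zer C X Y \<in> hom C X Y"
  using grp(1) by blast

lemma add_hom[intro]: "f \<in> hom C X Y \<Longrightarrow> g \<in> hom C X Y \<Longrightarrow> madd C f g \<in> hom C X Y"
  using grp(2) hom_ob1 hom_ob2 by blast
lemma neg_hom[intro]: "f \<in> hom C X Y \<Longrightarrow> mneg C f \<in> hom C X Y"
  using grp(3) hom_ob1 hom_ob2 by blast

lemma add_assoc: "f \<in> hom C X Y \<Longrightarrow> g \<in> hom C X Y \<Longrightarrow> h \<in> hom C X Y \<Longrightarrow>
   madd C (madd C f g) h = madd C f (madd C g h)"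
  using grp(4) hom_ob1 hom_ob2 by blast
lemma add_comm: "f \<in> hom C X Y \<Longrightarrow> g \<in> hom C X Y \<Longrightarrow> madd C f g = madd C g f"
  using grp(5) hom_ob1 hom_ob2 by blast
lemma add_zer: "f \<in> hom C X Y \<Longrightarrow> madd C f (zer C X Y) = f"
  using grp(6) hom_ob1 hom_ob2 by blast
lemma add_neg: "f \<in> hom C X Y \<Longrightarrow> madd C f (mneg C f) = zer C X Y"
  using grp(7) hom_ob1 hom_ob2 by blast

lemma comp_add_l: "f \<in> hom C X Y \<Longrightarrow> g \<in> hom C X Y \<Longrightarrow> h \<in> hom C Y Z \<Longrightarrow>
   ccomp C h (madd C f g) = madd C (ccomp C h f) (ccomp C h g)"
  using pre_parts(2) by blast
lemma comp_add_r: "f \<in> hom C X Y \<Longrightarrow> g \<in> hom C Y Z \<Longrightarrow> h \<in> hom C Y Z \<Longrightarrow>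
   ccomp C (madd C g h) f = madd C (ccomp C g f) (ccomp C h f)"
  using pre_parts(3) by blast

lemma zer_add: assumes f: "f \<in> hom C X Y" shows "madd C (zer C X Y) f = f"
proof -
  have z: "zer C X Y \<in> hom C X Y" using f hom_ob1 hom_ob2 by blast
  show ?thesis using add_comm[OF z f] add_zer[OF f] by simp
qed

lemma neg_unique: assumes a: "a \<in> hom C X Y" and b: "b \<in> hom C X Y"
  and e: "madd C a b = zer C X Y" shows "b = mneg C a"
proof -
  have na: "mneg C a \<in> hom C X Y" using a by blast
  have "b = madd C (zer C X Y) b" using zer_add b by simp
  also have "\<dots> = madd C (madd C (mneg C a) a) b"
    using add_neg[OF a] add_comm[OF a na] by simp
  also have "\<dots> = madd C (mneg C a) (madd C a b)" using add_assoc[OF na a b] by simp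
  also have "\<dots> = mneg C a" using e add_zer[OF na] by simp
  finally show ?thesis .
qed

lemma neg_neg: assumes a: "a \<in> hom C X Y" shows "mneg C (mneg C a) = a"
proof -
  have na: "mneg C a \<in> hom C X Y" using a by blast
  have "madd C (mneg C a) a = zer C X Y" using add_neg[OF a] add_comm[OF a na] by simp
  from neg_unique[OF na a this] show ?thesis by simp
qed

lemma sub_zero: assumes a: "a \<in> hom C X Y" and b: "b \<in> hom C X Y"
  and e: "madd C a (mneg C b) = zer C X Y" shows "a = b"
proof -
  have nb: "mneg C b \<in> hom C X Y" using b by blast
  have "madd C (mneg C b) a = zer C X Y" using e add_comm[OF a nb] by simp
  from neg_unique[OF nb a this] neg_neg[OF b] show ?thesis by simp
qed

lemma add_cancel: assumes a: "a \<in> hom C X Y" and b: "b \<in> hom C X Y" and c: "c \<in> hom C X Y"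
  and e: "madd C a b = madd C a c" shows "b = c"
proof -
  have na: "mneg C a \<in> hom C X Y" using a by blast
  have 0: "madd C (mneg C a) a = zer C X Y" using add_neg[OF a] add_comm[OF a na] by simp
  have "b = madd C (madd C (mneg C a) a) b" using 0 zer_add[OF b] by simp
  also have "\<dots> = madd C (mneg C a) (madd C a c)" using add_assoc[OF na a b] e by simp
  also have "\<dots> = madd C (madd C (mneg C a) a) c" using add_assoc[OF na a c] by simp
  also have "\<dots> = c" using 0 zer_add[OF c] by simp
  finally show ?thesis .
qed

lemma comp_zer_r: assumes h: "h \<in> hom C Y Z" and X: "X \<in> Ob C"
  shows "ccomp C h (zer C X Y) = zer C X Z"
proof -
  have Y: "Y \<in> Ob C" using h hom_ob1 by blast
  have Z: "Z \<in> Ob C" using h hom_ob2 by blast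
  have z: "zer C X Y \<in> hom C X Y" using X Y by blast
  have hz: "ccomp C h (zer C X Y) \<in> hom C X Z" using z h by blast
  have "madd C (ccomp C h (zer C X Y)) (ccomp C h (zer C X Y)) = ccomp C h (zer C X Y)"
    using comp_add_l[OF z z h] add_zer[OF z] by simp
  also have "\<dots> = madd C (ccomp C h (zer C X Y)) (zer C X Z)" using add_zer hz by simp
  finally show ?thesis using add_cancel[OF hz hz] hz X Z by blast
qed

lemma comp_zer_l: assumes f: "f \<in> hom C X Y" and Z: "Z \<in> Ob C"
  shows "ccomp C (zer C Y Z) f = zer C X Z"
proof -
  have X: "X \<in> Ob C" using f hom_ob1 by blast
  have Y: "Y \<in> Ob C" using f hom_ob2 by blast
  have z: "zer C Y Z \<in> hom C Y Z" using Z Y by blast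
  have hz: "ccomp C (zer C Y Z) f \<in> hom C X Z" using z f by blast
  have "madd C (ccomp C (zer C Y Z) f) (ccomp C (zer C Y Z) f) = ccomp C (zer C Y Z) f"
    using comp_add_r[OF f z z] add_zer[OF z] by simp
  also have "\<dots> = madd C (ccomp C (zer C Y Z) f) (zer C X Z)" using add_zer hz by simp
  finally show ?thesis using add_cancel[OF hz hz] hz X Z by blast
qed

lemma comp_neg_r: assumes f: "f \<in> hom C X Y" and h: "h \<in> hom C Y Z"
  shows "ccomp C h (mneg C f) = mneg C (ccomp C h f)"
proof (rule neg_unique)
  show "ccomp C h f \<in> hom C X Z" using f h by blast
  show "ccomp C h (mneg C f) \<in> hom C X Z" using f h by blast
  show "madd C (ccomp C h f) (ccomp C h (mneg C f)) = zer C X Z"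
    using comp_add_l[OF f neg_hom[OF f] h] add_neg[OF f] comp_zer_r[OF h] hom_ob1[OF f] by simp
qed

lemma comp_neg_l: assumes f: "f \<in> hom C X Y" and h: "h \<in> hom C Y Z"
  shows "ccomp C (mneg C h) f = mneg C (ccomp C h f)"
proof (rule neg_unique)
  show "ccomp C h f \<in> hom C X Z" using f h by blast
  show "ccomp C (mneg C h) f \<in> hom C X Z" using f h by blast
  show "madd C (ccomp C h f) (ccomp C (mneg C h) f) = zer C X Z"
    using comp_add_r[OF f h neg_hom[OF h]] add_neg[OF h] comp_zer_l[OF f] hom_ob2[OF h] by simp
qed

lemma neg_zer: assumes "X \<in> Ob C" "Y \<in> Ob C" shows "mneg C (zer C X Y) = zer C X Y"
proof -
  have z: "zer C X Y \<in> hom C X Y" using assms by blast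
  show ?thesis using neg_unique[OF z z] add_zer[OF z] by simp
qed


section \<open>Monos, epis, kernels, cokernels\<close>

lemma mono_cancel: assumes "is_mono C m" "m \<in> hom C X Y" "a \<in> hom C T X" "b \<in> hom C T X"
  "ccomp C m a = ccomp C m b" shows "a = b"
proof -
  have H: "\<forall>a b. a \<in> Mor C \<and> b \<in> Mor C \<and> cdom C a = cdom C b \<and>
        ccod C a = cdom C m \<and> ccod C b = cdom C m \<and> ccomp C m a = ccomp C m b \<longrightarrow> a = b"
    using assms(1) unfolding is_mono_def by (rule conjunct2)
  show ?thesis by (rule H[rule_format]) (use assms in \<open>simp add: hom_def\<close>)
qed

lemma mono_zero: assumes m: "is_mono C m" "m \<in> hom C X Y" and x: "x \<in> hom C T X"
  and e: "ccomp C m x = zer C T Y" shows "x = zer C T X"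
proof -
  have T: "T \<in> Ob C" using x hom_ob1 by blast
  have X: "X \<in> Ob C" using x hom_ob2 by blast
  have "ccomp C m (zer C T X) = zer C T Y" using comp_zer_r[OF m(2) T] .
  then show ?thesis using mono_cancel[OF m x zer_hom[OF T X]] e by simp
qed

lemma epi_cancel: assumes "is_epi C e" "e \<in> hom C X Y" "a \<in> hom C Y W" "b \<in> hom C Y W"
  "ccomp C a e = ccomp C b e" shows "a = b"
proof -
  have H: "\<forall>a b. a \<in> Mor C \<and> b \<in> Mor C \<and> ccod C a = ccod C b \<and>
        cdom C a = ccod C e \<and> cdom C b = ccod C e \<and> ccomp C a e = ccomp C b e \<longrightarrow> a = b"
    using assms(1) unfolding is_epi_def by (rule conjunct2)
  show ?thesis by (rule H[rule_format]) (use assms in \<open>simp add: hom_def\<close>)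
qed

lemma epi_zero: assumes m: "is_epi C e" "e \<in> hom C X Y" and u: "u \<in> hom C Y W"
  and eq: "ccomp C u e = zer C X W" shows "u = zer C Y W"
proof -
  have Y: "Y \<in> Ob C" using u hom_ob1 by blast
  have W: "W \<in> Ob C" using u hom_ob2 by blast
  have "ccomp C (zer C Y W) e = zer C X W" using comp_zer_l[OF m(2) W] .
  then show ?thesis using epi_cancel[OF m u zer_hom[OF Y W]] eq by simp
qed

lemma epiI0: assumes e: "e \<in> hom C X Y"
  and H: "\<And>W u. u \<in> hom C Y W \<Longrightarrow> ccomp C u e = zer C X W \<Longrightarrow> u = zer C Y W"
  shows "is_epi C e"
  unfolding is_epi_def
proof (intro conjI allI impI)
  show "e \<in> Mor C" using e by (auto simp: hom_def)
  fix a b assume ab: "a \<in> Mor C \<and> b \<in> Mor C \<and> ccod C a = ccod C b \<and>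
        cdom C a = ccod C e \<and> cdom C b = ccod C e \<and> ccomp C a e = ccomp C b e"
  define W where "W = ccod C a"
  have a: "a \<in> hom C Y W" using ab e unfolding W_def hom_def by auto
  have b: "b \<in> hom C Y W" using ab e unfolding W_def hom_def by auto
  have "ccomp C (madd C a (mneg C b)) e = madd C (ccomp C a e) (ccomp C (mneg C b) e)"
    using comp_add_r[OF e a neg_hom[OF b]] .
  also have "\<dots> = madd C (ccomp C b e) (mneg C (ccomp C b e))"
    using comp_neg_l[OF e b] ab by simp
  also have "\<dots> = zer C X W" using add_neg[OF comp_hom[OF e b]] .
  finally have "madd C a (mneg C b) = zer C Y W" using H[of "madd C a (mneg C b)" W] a b by blast
  then show "a = b" using sub_zero[OF a b] by blast
qed

lemma epi_comp: assumes "is_epi C e1" "e1 \<in> hom C A B" "is_epi C e2" "e2 \<in> hom C B D"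
  shows "is_epi C (ccomp C e2 e1)"
  unfolding is_epi_def
proof (intro conjI allI impI)
  have h: "ccomp C e2 e1 \<in> hom C A D" using assms by blast
  then show "ccomp C e2 e1 \<in> Mor C" by (auto simp: hom_def)
  fix a b assume ab: "a \<in> Mor C \<and> b \<in> Mor C \<and> ccod C a = ccod C b \<and>
        cdom C a = ccod C (ccomp C e2 e1) \<and> cdom C b = ccod C (ccomp C e2 e1) \<and>
        ccomp C a (ccomp C e2 e1) = ccomp C b (ccomp C e2 e1)"
  define W where "W = ccod C a"
  have a: "a \<in> hom C D W" using ab h unfolding W_def hom_def by auto
  have b: "b \<in> hom C D W" using ab h unfolding W_def hom_def by auto
  have "ccomp C (ccomp C a e2) e1 = ccomp C (ccomp C b e2) e1"
    using ab assoc[OF assms(2) assms(4) a] assoc[OF assms(2) assms(4) b] by simp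
  then have "ccomp C a e2 = ccomp C b e2"
    using epi_cancel[OF assms(1,2)] a b assms(4) by blast
  then show "a = b" using epi_cancel[OF assms(3,4) a b] by blast
qed

lemma mono_comp: assumes "is_mono C m1" "m1 \<in> hom C A B" "is_mono C m2" "m2 \<in> hom C B D"
  shows "is_mono C (ccomp C m2 m1)"
  unfolding is_mono_def
proof (intro conjI allI impI)
  have h: "ccomp C m2 m1 \<in> hom C A D" using assms by blast
  then show "ccomp C m2 m1 \<in> Mor C" by (auto simp: hom_def)
  fix a b assume ab: "a \<in> Mor C \<and> b \<in> Mor C \<and> cdom C a = cdom C b \<and>
        ccod C a = cdom C (ccomp C m2 m1) \<and> ccod C b = cdom C (ccomp C m2 m1) \<and>
        ccomp C (ccomp C m2 m1) a = ccomp C (ccomp C m2 m1) b"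
  define T where "T = cdom C a"
  have a: "a \<in> hom C T A" using ab h unfolding T_def hom_def by auto
  have b: "b \<in> hom C T A" using ab h unfolding T_def hom_def by auto
  have "ccomp C m2 (ccomp C m1 a) = ccomp C m2 (ccomp C m1 b)"
    using ab assoc[OF a assms(2) assms(4)] assoc[OF b assms(2) assms(4)] by simp
  then have "ccomp C m1 a = ccomp C m1 b"
    by (rule mono_cancel[OF assms(3,4) comp_hom[OF a assms(2)] comp_hom[OF b assms(2)]])
  then show "a = b" using mono_cancel[OF assms(1,2) a b] by blast
qed

lemma id_epi: assumes X: "X \<in> Ob C" shows "is_epi C (cid C X)"
  unfolding is_epi_def
proof (intro conjI allI impI)
  show "cid C X \<in> Mor C" using id_hom[OF X] by (simp add: hom_def)
  fix a b assume ab: "a \<in> Mor C \<and> b \<in> Mor C \<and> ccod C a = ccod C b \<and>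
        cdom C a = ccod C (cid C X) \<and> cdom C b = ccod C (cid C X) \<and>
        ccomp C a (cid C X) = ccomp C b (cid C X)"
  have c: "ccod C (cid C X) = X" using id_hom[OF X] by (simp add: hom_def)
  have a: "a \<in> hom C X (ccod C a)" using ab c by (simp add: hom_def)
  have b: "b \<in> hom C X (ccod C b)" using ab c by (simp add: hom_def)
  show "a = b" using ab id_r[OF a] id_r[OF b] by simp
qed

lemma kerD1: "is_kernel C f k \<Longrightarrow> f \<in> Mor C \<and> k \<in> Mor C \<and> ccod C k = cdom C f"
  unfolding is_kernel_def by argo
lemma kerD2: "is_kernel C f k \<Longrightarrow> ccomp C f k = zer C (cdom C k) (ccod C f)"
  unfolding is_kernel_def by argo
lemma kerD3: "is_kernel C f k \<Longrightarrow> (\<forall>h\<in>Mor C. ccod C h = cdom C f \<and> ccomp C f h = zer C (cdom C h) (ccod C f) \<longrightarrow>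
        (\<exists>!u. u \<in> hom C (cdom C h) (cdom C k) \<and> ccomp C k u = h))"
  unfolding is_kernel_def by argo
lemma cokerD1: "is_cokernel C f c \<Longrightarrow> f \<in> Mor C \<and> c \<in> Mor C \<and> cdom C c = ccod C f"
  unfolding is_cokernel_def by argo
lemma cokerD2: "is_cokernel C f c \<Longrightarrow> ccomp C c f = zer C (cdom C f) (ccod C c)"
  unfolding is_cokernel_def by argo
lemma cokerD3: "is_cokernel C f c \<Longrightarrow> (\<forall>h\<in>Mor C. cdom C h = ccod C f \<and> ccomp C h f = zer C (cdom C f) (ccod C h) \<longrightarrow>
        (\<exists>!u. u \<in> hom C (ccod C c) (ccod C h) \<and> ccomp C u c = h))"
  unfolding is_cokernel_def by argo

lemma ker_hom: "is_kernel C f k \<Longrightarrow> k \<in> hom C (cdom C k) (cdom C f)"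
  using kerD1 by (auto simp: hom_def)

lemma ker_zero: "is_kernel C f k \<Longrightarrow> f \<in> hom C X Y \<Longrightarrow> ccomp C f k = zer C (cdom C k) Y"
  using kerD2 by (auto simp: hom_def)

lemma ker_fac: assumes k: "is_kernel C f k" and f: "f \<in> hom C X Y" and h: "h \<in> hom C T X"
  and e: "ccomp C f h = zer C T Y"
  shows "\<exists>u. u \<in> hom C T (cdom C k) \<and> ccomp C k u = h"
proof -
  have "h \<in> Mor C" "ccod C h = cdom C f" "ccomp C f h = zer C (cdom C h) (ccod C f)"
    using h f e by (auto simp: hom_def)
  then have "\<exists>!u. u \<in> hom C (cdom C h) (cdom C k) \<and> ccomp C k u = h"
    using kerD3[OF k] by blast
  then show ?thesis using h by (auto simp: hom_def)
qed

lemma ker_mono: assumes k: "is_kernel C f k" shows "is_mono C k"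
  unfolding is_mono_def
proof (intro conjI allI impI)
  have kh: "k \<in> hom C (cdom C k) (cdom C f)" using ker_hom[OF k] .
  then show "k \<in> Mor C" by (auto simp: hom_def)
  have fM: "f \<in> Mor C" using kerD1[OF k] by blast
  have f: "f \<in> hom C (cdom C f) (ccod C f)" using homI[OF fM] .
  fix a b assume ab: "a \<in> Mor C \<and> b \<in> Mor C \<and> cdom C a = cdom C b \<and>
        ccod C a = cdom C k \<and> ccod C b = cdom C k \<and> ccomp C k a = ccomp C k b"
  define T where "T = cdom C a"
  have a: "a \<in> hom C T (cdom C k)" using ab unfolding T_def hom_def by auto
  have b: "b \<in> hom C T (cdom C k)" using ab unfolding T_def hom_def by auto
  have "ccomp C f (ccomp C k a) = ccomp C (ccomp C f k) a" using assoc[OF a kh f] by simp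
  also have "\<dots> = zer C T (ccod C f)" using ker_zero[OF k f] comp_zer_l[OF a] hom_ob2[OF f] by simp
  finally have e: "ccomp C f (ccomp C k a) = zer C T (ccod C f)" .
  obtain u where u: "u \<in> hom C T (cdom C k)" "ccomp C k u = ccomp C k a"
    using ker_fac[OF k f comp_hom[OF a kh] e] by blast
  have "ccomp C k a \<in> Mor C" "ccod C (ccomp C k a) = cdom C f"
    "ccomp C f (ccomp C k a) = zer C (cdom C (ccomp C k a)) (ccod C f)"
    using comp_hom[OF a kh] e by (auto simp: hom_def)
  then have "\<exists>!u. u \<in> hom C (cdom C (ccomp C k a)) (cdom C k) \<and> ccomp C k u = ccomp C k a"
    using kerD3[OF k] by blast
  moreover have "cdom C (ccomp C k a) = T" using comp_hom[OF a kh] by (auto simp: hom_def)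
  ultimately show "a = b" using a b ab by auto
qed

lemma coker_hom: "is_cokernel C f c \<Longrightarrow> c \<in> hom C (ccod C f) (ccod C c)"
  using cokerD1 by (auto simp: hom_def)

lemma coker_zero: "is_cokernel C f c \<Longrightarrow> f \<in> hom C X Y \<Longrightarrow> ccomp C c f = zer C X (ccod C c)"
  using cokerD2 by (auto simp: hom_def)

lemma coker_fac: assumes c: "is_cokernel C f c" and f: "f \<in> hom C X Y" and h: "h \<in> hom C Y W"
  and e: "ccomp C h f = zer C X W"
  shows "\<exists>u. u \<in> hom C (ccod C c) W \<and> ccomp C u c = h"
proof -
  have "h \<in> Mor C" "cdom C h = ccod C f" "ccomp C h f = zer C (cdom C f) (ccod C h)"
    using h f e by (auto simp: hom_def)
  then have "\<exists>!u. u \<in> hom C (ccod C c) (ccod C h) \<and> ccomp C u c = h"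
    using cokerD3[OF c] by blast
  then show ?thesis using h by (auto simp: hom_def)
qed

lemma abD: "(\<exists>Z. is_zero_obj C Z) \<and>
     (\<forall>X\<in>Ob C. \<forall>Y\<in>Ob C. \<exists>S i1 i2 p1 p2. is_biproduct C X Y S i1 i2 p1 p2) \<and>
     (\<forall>f\<in>Mor C. \<exists>k. is_kernel C f k) \<and>
     (\<forall>f\<in>Mor C. \<exists>c. is_cokernel C f c) \<and>
     (\<forall>m. is_mono C m \<longrightarrow> (\<exists>f. is_kernel C f m)) \<and>
     (\<forall>e. is_epi C e \<longrightarrow> (\<exists>f. is_cokernel C f e))"
  using abel unfolding abelian_category_def by argo

lemma ex_ker: "f \<in> Mor C \<Longrightarrow> \<exists>k. is_kernel C f k"
  using abD by blast
lemma ex_coker: "f \<in> Mor C \<Longrightarrow> \<exists>c. is_cokernel C f c"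
  using abD by blast
lemma mono_is_ker: "is_mono C m \<Longrightarrow> \<exists>f. is_kernel C f m"
  using abD by blast
lemma epi_is_coker: "is_epi C e \<Longrightarrow> \<exists>f. is_cokernel C f e"
  using abD by blast

lemma epi_coker_ker: assumes ep: "is_epi C e" and e: "e \<in> hom C X Y" and k: "is_kernel C e k"
  and u: "u \<in> hom C X W" and uk: "ccomp C u k = zer C (cdom C k) W"
  shows "\<exists>v. v \<in> hom C Y W \<and> ccomp C v e = u"
proof -
  obtain h where h: "is_cokernel C h e" using epi_is_coker[OF ep] by blast
  have hM: "h \<in> Mor C" and hc: "ccod C h = X" using cokerD1[OF h] e by (auto simp: hom_def)
  define T where "T = cdom C h"
  have hh: "h \<in> hom C T X" using hM hc T_def by (auto simp: hom_def)
  have "ccomp C e h = zer C T Y" using coker_zero[OF h hh] e by (auto simp: hom_def)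
  then obtain t where t: "t \<in> hom C T (cdom C k)" "ccomp C k t = h"
    using ker_fac[OF k e hh] by blast
  have kh: "k \<in> hom C (cdom C k) X" using ker_hom[OF k] e by (auto simp: hom_def)
  have "ccomp C u h = ccomp C (ccomp C u k) t" using assoc[OF t(1) kh u] t(2) by simp
  also have "\<dots> = zer C T W" using uk comp_zer_l[OF t(1)] hom_ob2[OF u] by simp
  finally have "ccomp C u h = zer C T W" .
  then obtain v where "v \<in> hom C (ccod C e) W" "ccomp C v e = u"
    using coker_fac[OF h hh u] by blast
  then show ?thesis using e by (auto simp: hom_def)
qed

section \<open>Image factorisation, covers, exactness\<close>

lemma img_fact: assumes c: "is_cokernel C f c" and m: "is_kernel C c m" and f: "f \<in> hom C X Y"
  shows "\<exists>e. e \<in> hom C X (cdom C m) \<and> ccomp C m e = f \<and> is_epi C e"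
proof -
  define Q where "Q = ccod C c"
  define I where "I = cdom C m"
  have ch: "c \<in> hom C Y Q" using coker_hom[OF c] f Q_def by (auto simp: hom_def)
  have mh: "m \<in> hom C I Y" using ker_hom[OF m] ch I_def by (auto simp: hom_def)
  have cf: "ccomp C c f = zer C X Q" using coker_zero[OF c f] Q_def by simp
  obtain e where e: "e \<in> hom C X I" "ccomp C m e = f"
    using ker_fac[OF m ch f cf] I_def by blast
  have "is_epi C e"
  proof (rule epiI0[OF e(1)])
    fix W u assume u: "u \<in> hom C I W" and ue: "ccomp C u e = zer C X W"
    have eM: "e \<in> Mor C" using e(1) by (simp add: hom_def)
    obtain q where q: "is_cokernel C e q" using ex_coker[OF eM] by blast
    define Qe where "Qe = ccod C q"
    have qh: "q \<in> hom C I Qe" using coker_hom[OF q] e(1) Qe_def by (auto simp: hom_def)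
    have qe: "ccomp C q e = zer C X Qe" using coker_zero[OF q e(1)] Qe_def by simp
    have qM: "q \<in> Mor C" using qh by (simp add: hom_def)
    obtain r where r: "is_kernel C q r" using ex_ker[OF qM] by blast
    define K where "K = cdom C r"
    have rh: "r \<in> hom C K I" using ker_hom[OF r] qh K_def by (auto simp: hom_def)
    obtain e1 where e1: "e1 \<in> hom C X K" "ccomp C r e1 = e"
      using ker_fac[OF r qh e(1) qe] K_def by blast
    have mrh: "ccomp C m r \<in> hom C K Y" using rh mh by blast
    have mrmono: "is_mono C (ccomp C m r)"
      using mono_comp[OF ker_mono[OF r] rh ker_mono[OF m] mh] .
    obtain s where s: "is_kernel C s (ccomp C m r)" using mono_is_ker[OF mrmono] by blast
    have sM: "s \<in> Mor C" and sd: "cdom C s = Y" using kerD1[OF s] mrh by (auto simp: hom_def)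
    define S' where "S' = ccod C s"
    have sh: "s \<in> hom C Y S'" using sM sd S'_def by (simp add: hom_def)
    have smr: "ccomp C s (ccomp C m r) = zer C K S'" using ker_zero[OF s sh] mrh by (simp add: hom_def)
    have "ccomp C s f = ccomp C s (ccomp C (ccomp C m r) e1)"
      using e e1 assoc[OF e1(1) rh mh] by simp
    also have "\<dots> = ccomp C (ccomp C s (ccomp C m r)) e1" using assoc[OF e1(1) mrh sh] by simp
    also have "\<dots> = zer C X S'" using smr comp_zer_l[OF e1(1)] hom_ob2[OF sh] by simp
    finally have sf: "ccomp C s f = zer C X S'" .
    obtain s' where s': "s' \<in> hom C Q S'" "ccomp C s' c = s"
      using coker_fac[OF c f sh sf] Q_def by blast
    have cm: "ccomp C c m = zer C I Q" using ker_zero[OF m ch] I_def by simp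
    have "ccomp C s m = ccomp C s' (ccomp C c m)" using s' assoc[OF mh ch s'(1)] by simp
    also have "\<dots> = zer C I S'" using cm comp_zer_r[OF s'(1)] hom_ob1[OF mh] by simp
    finally have sm: "ccomp C s m = zer C I S'" .
    obtain v where v: "v \<in> hom C I K" "ccomp C (ccomp C m r) v = m"
      using ker_fac[OF s sh mh sm] mrh by (auto simp: hom_def)
    have "ccomp C m (ccomp C r v) = ccomp C m (cid C I)"
      using v assoc[OF v(1) rh mh] id_r[OF mh] by simp
    then have rv: "ccomp C r v = cid C I"
      using mono_cancel[OF ker_mono[OF m] mh comp_hom[OF v(1) rh] id_hom[OF hom_ob1[OF mh]]] by simp
    have qr: "ccomp C q r = zer C K Qe" using ker_zero[OF r qh] K_def by simp
    have "q = ccomp C q (ccomp C r v)" using rv id_r[OF qh] by simp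
    also have "\<dots> = ccomp C (ccomp C q r) v" using assoc[OF v(1) rh qh] by simp
    also have "\<dots> = zer C I Qe" using qr comp_zer_l[OF v(1)] hom_ob2[OF qh] by simp
    finally have q0: "q = zer C I Qe" .
    obtain u' where u': "u' \<in> hom C Qe W" "ccomp C u' q = u"
      using coker_fac[OF q e(1) u ue] Qe_def by blast
    show "u = zer C I W" using u' q0 comp_zer_r[OF u'(1) hom_ob1[OF u]] by simp
  qed
  then show ?thesis using e I_def by blast
qed

lemma bpD: "is_biproduct C X Y S i1 i2 p1 p2 \<Longrightarrow> S \<in> Ob C \<and>
     i1 \<in> hom C X S \<and> i2 \<in> hom C Y S \<and> p1 \<in> hom C S X \<and> p2 \<in> hom C S Y \<and>
     ccomp C p1 i1 = cid C X \<and> ccomp C p2 i2 = cid C Y \<and>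
     ccomp C p2 i1 = zer C X Y \<and> ccomp C p1 i2 = zer C Y X \<and>
     madd C (ccomp C i1 p1) (ccomp C i2 p2) = cid C S"
  unfolding is_biproduct_def by argo

lemma ex_bp: "X \<in> Ob C \<Longrightarrow> Y \<in> Ob C \<Longrightarrow> \<exists>S i1 i2 p1 p2. is_biproduct C X Y S i1 i2 p1 p2"
  using abD by blast

lemma neg_zero_eq: assumes a: "a \<in> hom C X Y" and e: "mneg C a = zer C X Y" shows "a = zer C X Y"
proof -
  have "a = mneg C (mneg C a)" using neg_neg[OF a] by simp
  also have "\<dots> = zer C X Y" using e neg_zer hom_ob1[OF a] hom_ob2[OF a] by simp
  finally show ?thesis .
qed

lemma epi_cover: assumes ep: "is_epi C e" and e: "e \<in> hom C X Y" and y: "y \<in> hom C T Y"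
  shows "\<exists>T' e' x. e' \<in> hom C T' T \<and> is_epi C e' \<and> x \<in> hom C T' X \<and> ccomp C e x = ccomp C y e'"
proof -
  have T: "T \<in> Ob C" using y hom_ob1 by blast
  have X: "X \<in> Ob C" using e hom_ob1 by blast
  have Y: "Y \<in> Ob C" using e hom_ob2 by blast
  obtain S i1 i2 p1 p2 where bp: "is_biproduct C T X S i1 i2 p1 p2" using ex_bp[OF T X] by blast
  note b = bpD[OF bp]
  have i1: "i1 \<in> hom C T S" and i2: "i2 \<in> hom C X S" and p1: "p1 \<in> hom C S T"
    and p2: "p2 \<in> hom C S X" using b by auto
  define \<phi> where "\<phi> = madd C (ccomp C y p1) (mneg C (ccomp C e p2))"
  have yp1: "ccomp C y p1 \<in> hom C S Y" using y p1 by blast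
  have ep2: "ccomp C e p2 \<in> hom C S Y" using e p2 by blast
  have ph: "\<phi> \<in> hom C S Y" unfolding \<phi>_def using yp1 ep2 by blast
  have phi2: "ccomp C \<phi> i2 = mneg C e"
  proof -
    have "ccomp C \<phi> i2 = madd C (ccomp C (ccomp C y p1) i2) (ccomp C (mneg C (ccomp C e p2)) i2)"
      unfolding \<phi>_def using comp_add_r[OF i2 yp1 neg_hom[OF ep2]] .
    also have "ccomp C (ccomp C y p1) i2 = zer C X Y"
      using assoc[OF i2 p1 y] b comp_zer_r[OF y X] by simp
    also have "ccomp C (mneg C (ccomp C e p2)) i2 = mneg C e"
      using comp_neg_l[OF i2 ep2] assoc[OF i2 p2 e] b id_r[OF e] by simp
    also have "madd C (zer C X Y) (mneg C e) = mneg C e" using zer_add neg_hom[OF e] by blast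
    finally show ?thesis .
  qed
  have key: "\<And>W v. v \<in> hom C Y W \<Longrightarrow> ccomp C (ccomp C v \<phi>) i2 = zer C X W \<Longrightarrow> v = zer C Y W"
  proof -
    fix W v assume v: "v \<in> hom C Y W" and h: "ccomp C (ccomp C v \<phi>) i2 = zer C X W"
    have "ccomp C (ccomp C v \<phi>) i2 = mneg C (ccomp C v e)"
      using assoc[OF i2 ph v] phi2 comp_neg_r[OF e v] by simp
    then have "ccomp C v e = zer C X W" using neg_zero_eq[OF comp_hom[OF e v]] h by simp
    then show "v = zer C Y W" using epi_zero[OF ep e v] by blast
  qed
  have phepi: "is_epi C \<phi>"
  proof (rule epiI0[OF ph])
    fix W u assume u: "u \<in> hom C Y W" and h: "ccomp C u \<phi> = zer C S W"
    show "u = zer C Y W"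
      using key[OF u] h comp_zer_l[OF i2 hom_ob2[OF u]] by simp
  qed
  have phM: "\<phi> \<in> Mor C" using ph by (simp add: hom_def)
  obtain k where k: "is_kernel C \<phi> k" using ex_ker[OF phM] by blast
  define K where "K = cdom C k"
  have kh: "k \<in> hom C K S" using ker_hom[OF k] ph K_def by (auto simp: hom_def)
  have phk: "ccomp C \<phi> k = zer C K Y" using ker_zero[OF k ph] K_def by simp
  define e' where "e' = ccomp C p1 k"
  define x where "x = ccomp C p2 k"
  have e'h: "e' \<in> hom C K T" unfolding e'_def using kh p1 by blast
  have xh: "x \<in> hom C K X" unfolding x_def using kh p2 by blast
  have "ccomp C \<phi> k = madd C (ccomp C y e') (mneg C (ccomp C e x))"
    unfolding \<phi>_def e'_def x_def
    using comp_add_r[OF kh yp1 neg_hom[OF ep2]] comp_neg_l[OF kh ep2]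
      assoc[OF kh p1 y] assoc[OF kh p2 e] by simp
  then have eq: "ccomp C y e' = ccomp C e x"
    using sub_zero[OF comp_hom[OF e'h y] comp_hom[OF xh e]] phk by simp
  have "is_epi C e'"
  proof (rule epiI0[OF e'h])
    fix W u assume u: "u \<in> hom C T W" and h: "ccomp C u e' = zer C K W"
    have up1: "ccomp C u p1 \<in> hom C S W" using u p1 by blast
    have "ccomp C (ccomp C u p1) k = zer C K W" using h assoc[OF kh p1 u] e'_def by simp
    then obtain v where v: "v \<in> hom C Y W" "ccomp C v \<phi> = ccomp C u p1"
      using epi_coker_ker[OF phepi ph k up1] K_def by blast
    have "ccomp C (ccomp C v \<phi>) i2 = ccomp C u (ccomp C p1 i2)"
      using v assoc[OF i2 p1 u] by simp
    also have "\<dots> = zer C X W" using b comp_zer_r[OF u X] by simp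
    finally have "v = zer C Y W" using key[OF v(1)] by blast
    then have up0: "ccomp C u p1 = zer C S W" using v comp_zer_l[OF ph hom_ob2[OF u]] by simp
    have "u = ccomp C u (ccomp C p1 i1)" using b id_r[OF u] by simp
    also have "\<dots> = ccomp C (ccomp C u p1) i1" using assoc[OF i1 p1 u] by simp
    also have "\<dots> = zer C T W" using up0 comp_zer_l[OF i1 hom_ob2[OF u]] by simp
    finally show "u = zer C T W" .
  qed
  then show ?thesis using e'h xh eq by metis
qed

lemma epi_by_cover: assumes e: "e \<in> hom C X Y"
  and H: "\<And>T y. y \<in> hom C T Y \<Longrightarrow> \<exists>T' e' x. e' \<in> hom C T' T \<and> is_epi C e' \<and> x \<in> hom C T' X \<and> ccomp C e x = ccomp C y e'"
  shows "is_epi C e"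
proof (rule epiI0[OF e])
  fix W u assume u: "u \<in> hom C Y W" and ue: "ccomp C u e = zer C X W"
  have Y: "Y \<in> Ob C" using e hom_ob2 by blast
  obtain T' e' x where c: "e' \<in> hom C T' Y" "is_epi C e'" "x \<in> hom C T' X"
    "ccomp C e x = ccomp C (cid C Y) e'" using H[OF id_hom[OF Y]] by blast
  have ex: "ccomp C e x = e'" using c id_l by simp
  have "ccomp C u e' = ccomp C (ccomp C u e) x" using ex assoc[OF c(3) e u] by simp
  also have "\<dots> = zer C T' W" using ue comp_zer_l[OF c(3) hom_ob2[OF u]] by simp
  finally show "u = zer C Y W" using epi_zero[OF c(2) c(1) u] by blast
qed

lemma exactD: "exact C f g \<Longrightarrow> f \<in> Mor C \<and> g \<in> Mor C \<and> ccod C f = cdom C g \<and>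
     (\<forall>c m k. is_cokernel C f c \<and> is_kernel C c m \<and> is_kernel C g k \<longrightarrow>
        (\<exists>u v. u \<in> hom C (cdom C k) (cdom C m) \<and> v \<in> hom C (cdom C m) (cdom C k) \<and>
               ccomp C m u = k \<and> ccomp C k v = m))"
  unfolding exact_def by argo

lemma exact_imp: assumes ex: "exact C f g" and f: "f \<in> hom C X Y" and g: "g \<in> hom C Y Z"
  and y: "y \<in> hom C T Y" and gy: "ccomp C g y = zer C T Z"
  shows "\<exists>T' e x. e \<in> hom C T' T \<and> is_epi C e \<and> x \<in> hom C T' X \<and> ccomp C f x = ccomp C y e"
proof -
  have fM: "f \<in> Mor C" and gM: "g \<in> Mor C" using f g by (auto simp: hom_def)
  obtain c where c: "is_cokernel C f c" using ex_coker[OF fM] by blast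
  have cM: "c \<in> Mor C" using cokerD1[OF c] by blast
  obtain m where m: "is_kernel C c m" using ex_ker[OF cM] by blast
  obtain k where k: "is_kernel C g k" using ex_ker[OF gM] by blast
  obtain u where u: "u \<in> hom C (cdom C k) (cdom C m)" "ccomp C m u = k"
    using exactD[OF ex] c m k by blast
  obtain e0 where e0: "e0 \<in> hom C X (cdom C m)" "ccomp C m e0 = f" "is_epi C e0"
    using img_fact[OF c m f] by blast
  obtain t where t: "t \<in> hom C T (cdom C k)" "ccomp C k t = y" using ker_fac[OF k g y gy] by blast
  have mh: "m \<in> hom C (cdom C m) Y" using ker_hom[OF m] coker_hom[OF c] f by (auto simp: hom_def)
  have kh: "k \<in> hom C (cdom C k) Y" using ker_hom[OF k] g by (auto simp: hom_def)
  have w: "ccomp C u t \<in> hom C T (cdom C m)" using u t by blast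
  obtain T' e x where cv: "e \<in> hom C T' T" "is_epi C e" "x \<in> hom C T' X"
    "ccomp C e0 x = ccomp C (ccomp C u t) e" using epi_cover[OF e0(3) e0(1) w] by blast
  have "ccomp C f x = ccomp C m (ccomp C e0 x)" using e0 assoc[OF cv(3) e0(1) mh] by simp
  also have "\<dots> = ccomp C m (ccomp C (ccomp C u t) e)" using cv by simp
  also have "\<dots> = ccomp C (ccomp C m (ccomp C u t)) e" using assoc[OF cv(1) w mh] by simp
  also have "ccomp C m (ccomp C u t) = y" using assoc[OF t(1) u(1) mh] u t by simp
  finally show ?thesis using cv by blast
qed

lemma exact_comp: assumes ex: "exact C f g" and f: "f \<in> hom C X Y" and g: "g \<in> hom C Y Z"
  shows "ccomp C g f = zer C X Z"
proof -
  have fM: "f \<in> Mor C" and gM: "g \<in> Mor C" using f g by (auto simp: hom_def)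
  obtain c where c: "is_cokernel C f c" using ex_coker[OF fM] by blast
  have cM: "c \<in> Mor C" using cokerD1[OF c] by blast
  obtain m where m: "is_kernel C c m" using ex_ker[OF cM] by blast
  obtain k where k: "is_kernel C g k" using ex_ker[OF gM] by blast
  obtain v where v: "v \<in> hom C (cdom C m) (cdom C k)" "ccomp C k v = m"
    using exactD[OF ex] c m k by blast
  obtain e0 where e0: "e0 \<in> hom C X (cdom C m)" "ccomp C m e0 = f" "is_epi C e0"
    using img_fact[OF c m f] by blast
  have mh: "m \<in> hom C (cdom C m) Y" using ker_hom[OF m] coker_hom[OF c] f by (auto simp: hom_def)
  have kh: "k \<in> hom C (cdom C k) Y" using ker_hom[OF k] g by (auto simp: hom_def)
  have "ccomp C g m = ccomp C (ccomp C g k) v" using assoc[OF v(1) kh g] v by simp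
  also have "\<dots> = zer C (cdom C m) Z" using ker_zero[OF k g] comp_zer_l[OF v(1)] hom_ob2[OF g] by simp
  finally have gm: "ccomp C g m = zer C (cdom C m) Z" .
  have "ccomp C g f = ccomp C (ccomp C g m) e0" using assoc[OF e0(1) mh g] e0 by simp
  also have "\<dots> = zer C X Z" using gm comp_zer_l[OF e0(1)] hom_ob2[OF g] by simp
  finally show ?thesis .
qed

lemma exact_intro: assumes f: "f \<in> hom C X Y" and g: "g \<in> hom C Y Z"
  and gf: "ccomp C g f = zer C X Z"
  and H: "\<And>T y. y \<in> hom C T Y \<Longrightarrow> ccomp C g y = zer C T Z \<Longrightarrow>
     \<exists>T' e x. e \<in> hom C T' T \<and> is_epi C e \<and> x \<in> hom C T' X \<and> ccomp C f x = ccomp C y e"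
  shows "exact C f g"
  unfolding exact_def
proof (intro conjI allI impI)
  show "f \<in> Mor C" "g \<in> Mor C" "ccod C f = cdom C g" using f g by (auto simp: hom_def)
  fix c m k assume a: "is_cokernel C f c \<and> is_kernel C c m \<and> is_kernel C g k"
  then have c: "is_cokernel C f c" and m: "is_kernel C c m" and k: "is_kernel C g k" by auto
  obtain e0 where e0: "e0 \<in> hom C X (cdom C m)" "ccomp C m e0 = f" "is_epi C e0"
    using img_fact[OF c m f] by blast
  define Q where "Q = ccod C c"
  have ch: "c \<in> hom C Y Q" using coker_hom[OF c] f Q_def by (auto simp: hom_def)
  have mh: "m \<in> hom C (cdom C m) Y" using ker_hom[OF m] ch by (auto simp: hom_def)
  have kh: "k \<in> hom C (cdom C k) Y" using ker_hom[OF k] g by (auto simp: hom_def)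
  have "ccomp C (ccomp C g m) e0 = zer C X Z" using assoc[OF e0(1) mh g] e0 gf by simp
  then have gm: "ccomp C g m = zer C (cdom C m) Z" using epi_zero[OF e0(3) e0(1) comp_hom[OF mh g]] by blast
  obtain v where v: "v \<in> hom C (cdom C m) (cdom C k)" "ccomp C k v = m"
    using ker_fac[OF k g mh gm] by blast
  have gk: "ccomp C g k = zer C (cdom C k) Z" using ker_zero[OF k g] .
  obtain T' e x where cv: "e \<in> hom C T' (cdom C k)" "is_epi C e" "x \<in> hom C T' X"
    "ccomp C f x = ccomp C k e" using H[OF kh gk] by blast
  have "ccomp C (ccomp C c k) e = ccomp C c (ccomp C f x)" using assoc[OF cv(1) kh ch] cv by simp
  also have "\<dots> = ccomp C (ccomp C c f) x" using assoc[OF cv(3) f ch] by simp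
  also have "\<dots> = zer C T' Q" using coker_zero[OF c f] Q_def comp_zer_l[OF cv(3)] hom_ob2[OF ch] by simp
  finally have "ccomp C c k = zer C (cdom C k) Q" using epi_zero[OF cv(2) cv(1) comp_hom[OF kh ch]] by blast
  then obtain u where u: "u \<in> hom C (cdom C k) (cdom C m)" "ccomp C m u = k"
    using ker_fac[OF m ch kh] by blast
  show "\<exists>u v. u \<in> hom C (cdom C k) (cdom C m) \<and> v \<in> hom C (cdom C m) (cdom C k) \<and>
               ccomp C m u = k \<and> ccomp C k v = m" using u v by blast
qed

section \<open>Chosen biproducts and zero object\<close>

lemma bsum: assumes X: "X \<in> Ob C" and Y: "Y \<in> Ob C"
  shows "is_biproduct C X Y (bobj C X Y) (binj1 C X Y) (binj2 C X Y) (bprj1 C X Y) (bprj2 C X Y)"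
proof -
  obtain S i1 i2 p1 p2 where "is_biproduct C X Y S i1 i2 p1 p2" using ex_bp[OF X Y] by blast
  then have "\<exists>t. case t of (S, i1, i2, p1, p2) \<Rightarrow> is_biproduct C X Y S i1 i2 p1 p2"
    by (intro exI[of _ "(S, i1, i2, p1, p2)"]) simp
  then have "case bsum_data C X Y of (S, i1, i2, p1, p2) \<Rightarrow> is_biproduct C X Y S i1 i2 p1 p2"
    unfolding bsum_data_def by (rule someI_ex)
  then show ?thesis unfolding bobj_def binj1_def binj2_def bprj1_def bprj2_def
    by (cases "bsum_data C X Y") auto
qed

lemma bs: assumes X: "X \<in> Ob C" and Y: "Y \<in> Ob C"
  shows "bobj C X Y \<in> Ob C"
    "binj1 C X Y \<in> hom C X (bobj C X Y)" "binj2 C X Y \<in> hom C Y (bobj C X Y)"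
    "bprj1 C X Y \<in> hom C (bobj C X Y) X" "bprj2 C X Y \<in> hom C (bobj C X Y) Y"
    "ccomp C (bprj1 C X Y) (binj1 C X Y) = cid C X"
    "ccomp C (bprj2 C X Y) (binj2 C X Y) = cid C Y"
    "ccomp C (bprj2 C X Y) (binj1 C X Y) = zer C X Y"
    "ccomp C (bprj1 C X Y) (binj2 C X Y) = zer C Y X"
    "madd C (ccomp C (binj1 C X Y) (bprj1 C X Y)) (ccomp C (binj2 C X Y) (bprj2 C X Y)) = cid C (bobj C X Y)"
  using bpD[OF bsum[OF X Y]] by auto

lemma col_hom: assumes a: "a \<in> hom C T Y1" and b: "b \<in> hom C T Y2"
  shows "col C Y1 Y2 a b \<in> hom C T (bobj C Y1 Y2)"
proof -
  note s = bs[OF hom_ob2[OF a] hom_ob2[OF b]]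
  show ?thesis unfolding col_def using s a b by blast
qed

lemma col_p1: assumes a: "a \<in> hom C T Y1" and b: "b \<in> hom C T Y2"
  shows "ccomp C (bprj1 C Y1 Y2) (col C Y1 Y2 a b) = a"
proof -
  note s = bs[OF hom_ob2[OF a] hom_ob2[OF b]]
  have "ccomp C (bprj1 C Y1 Y2) (col C Y1 Y2 a b) =
     madd C (ccomp C (bprj1 C Y1 Y2) (ccomp C (binj1 C Y1 Y2) a)) (ccomp C (bprj1 C Y1 Y2) (ccomp C (binj2 C Y1 Y2) b))"
    unfolding col_def using comp_add_l s a b by blast
  also have "\<dots> = madd C a (zer C T Y1)"
    using assoc[OF a s(2) s(4)] assoc[OF b s(3) s(4)] s id_l[OF a] comp_zer_l[OF b] hom_ob2[OF a] by simp
  also have "\<dots> = a" using add_zer[OF a] .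
  finally show ?thesis .
qed

lemma col_p2: assumes a: "a \<in> hom C T Y1" and b: "b \<in> hom C T Y2"
  shows "ccomp C (bprj2 C Y1 Y2) (col C Y1 Y2 a b) = b"
proof -
  note s = bs[OF hom_ob2[OF a] hom_ob2[OF b]]
  have "ccomp C (bprj2 C Y1 Y2) (col C Y1 Y2 a b) =
     madd C (ccomp C (bprj2 C Y1 Y2) (ccomp C (binj1 C Y1 Y2) a)) (ccomp C (bprj2 C Y1 Y2) (ccomp C (binj2 C Y1 Y2) b))"
    unfolding col_def using comp_add_l s a b by blast
  also have "\<dots> = madd C (zer C T Y2) b"
    using assoc[OF a s(2) s(5)] assoc[OF b s(3) s(5)] s id_l[OF b] comp_zer_l[OF a] hom_ob2[OF b] by simp
  also have "\<dots> = b" using zer_add[OF b] .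
  finally show ?thesis .
qed

lemma bext: assumes Y1: "Y1 \<in> Ob C" and Y2: "Y2 \<in> Ob C"
  and z: "z \<in> hom C T (bobj C Y1 Y2)" and z': "z' \<in> hom C T (bobj C Y1 Y2)"
  and e1: "ccomp C (bprj1 C Y1 Y2) z = ccomp C (bprj1 C Y1 Y2) z'"
  and e2: "ccomp C (bprj2 C Y1 Y2) z = ccomp C (bprj2 C Y1 Y2) z'"
  shows "z = z'"
proof -
  note s = bs[OF Y1 Y2]
  have h1: "ccomp C (binj1 C Y1 Y2) (bprj1 C Y1 Y2) \<in> hom C (bobj C Y1 Y2) (bobj C Y1 Y2)" using s by blast
  have h2: "ccomp C (binj2 C Y1 Y2) (bprj2 C Y1 Y2) \<in> hom C (bobj C Y1 Y2) (bobj C Y1 Y2)" using s by blast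
  have eq: "\<And>w. w \<in> hom C T (bobj C Y1 Y2) \<Longrightarrow> w = madd C (ccomp C (binj1 C Y1 Y2) (ccomp C (bprj1 C Y1 Y2) w))
      (ccomp C (binj2 C Y1 Y2) (ccomp C (bprj2 C Y1 Y2) w))"
  proof -
    fix w assume w: "w \<in> hom C T (bobj C Y1 Y2)"
    have "w = ccomp C (cid C (bobj C Y1 Y2)) w" using id_l[OF w] by simp
    also have "\<dots> = madd C (ccomp C (ccomp C (binj1 C Y1 Y2) (bprj1 C Y1 Y2)) w) (ccomp C (ccomp C (binj2 C Y1 Y2) (bprj2 C Y1 Y2)) w)"
      using s(10) comp_add_r[OF w h1 h2] by simp
    also have "\<dots> = madd C (ccomp C (binj1 C Y1 Y2) (ccomp C (bprj1 C Y1 Y2) w))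
      (ccomp C (binj2 C Y1 Y2) (ccomp C (bprj2 C Y1 Y2) w))"
      using assoc[OF w s(4) s(2)] assoc[OF w s(5) s(3)] by simp
    finally show "w = madd C (ccomp C (binj1 C Y1 Y2) (ccomp C (bprj1 C Y1 Y2) w))
      (ccomp C (binj2 C Y1 Y2) (ccomp C (bprj2 C Y1 Y2) w))" .
  qed
  show ?thesis using eq[OF z] eq[OF z'] e1 e2 by simp
qed

lemma row_hom: assumes a: "a \<in> hom C X1 Y" and b: "b \<in> hom C X2 Y"
  shows "row C X1 X2 a b \<in> hom C (bobj C X1 X2) Y"
proof -
  note s = bs[OF hom_ob1[OF a] hom_ob1[OF b]]
  show ?thesis unfolding row_def using s a b by blast
qed

lemma row_col: assumes a: "a \<in> hom C X1 Y" and b: "b \<in> hom C X2 Y"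
  and x: "x \<in> hom C T X1" and y: "y \<in> hom C T X2"
  shows "ccomp C (row C X1 X2 a b) (col C X1 X2 x y) = madd C (ccomp C a x) (ccomp C b y)"
proof -
  note s = bs[OF hom_ob1[OF a] hom_ob1[OF b]]
  have c: "col C X1 X2 x y \<in> hom C T (bobj C X1 X2)" using col_hom[OF x y] .
  have "ccomp C (row C X1 X2 a b) (col C X1 X2 x y) =
    madd C (ccomp C (ccomp C a (bprj1 C X1 X2)) (col C X1 X2 x y)) (ccomp C (ccomp C b (bprj2 C X1 X2)) (col C X1 X2 x y))"
    unfolding row_def using comp_add_r[OF c] s a b by blast
  also have "\<dots> = madd C (ccomp C a x) (ccomp C b y)"
    using assoc[OF c s(4) a] assoc[OF c s(5) b] col_p1[OF x y] col_p2[OF x y] by simp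
  finally show ?thesis .
qed

lemma mat_hom: assumes a: "a \<in> hom C X1 Y1" and b: "b \<in> hom C X2 Y1"
  and c: "c \<in> hom C X1 Y2" and d: "d \<in> hom C X2 Y2"
  shows "mat C X1 X2 Y1 Y2 a b c d \<in> hom C (bobj C X1 X2) (bobj C Y1 Y2)"
proof -
  note s = bs[OF hom_ob1[OF a] hom_ob1[OF b]]
  show ?thesis unfolding mat_def using s col_hom[OF a c] col_hom[OF b d] by blast
qed

lemma mat_p1: assumes a: "a \<in> hom C X1 Y1" and b: "b \<in> hom C X2 Y1"
  and c: "c \<in> hom C X1 Y2" and d: "d \<in> hom C X2 Y2"
  shows "ccomp C (bprj1 C Y1 Y2) (mat C X1 X2 Y1 Y2 a b c d) = row C X1 X2 a b"
proof -
  note s = bs[OF hom_ob1[OF a] hom_ob1[OF b]]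
  note t = bs[OF hom_ob2[OF a] hom_ob2[OF c]]
  have c1: "ccomp C (col C Y1 Y2 a c) (bprj1 C X1 X2) \<in> hom C (bobj C X1 X2) (bobj C Y1 Y2)"
    using col_hom[OF a c] s by blast
  have c2: "ccomp C (col C Y1 Y2 b d) (bprj2 C X1 X2) \<in> hom C (bobj C X1 X2) (bobj C Y1 Y2)"
    using col_hom[OF b d] s by blast
  show ?thesis unfolding mat_def row_def
    using comp_add_l[OF c1 c2 t(4)] assoc[OF s(4) col_hom[OF a c] t(4), symmetric]
      assoc[OF s(5) col_hom[OF b d] t(4), symmetric] col_p1[OF a c] col_p1[OF b d] by simp
qed

lemma mat_p2: assumes a: "a \<in> hom C X1 Y1" and b: "b \<in> hom C X2 Y1"
  and c: "c \<in> hom C X1 Y2" and d: "d \<in> hom C X2 Y2"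
  shows "ccomp C (bprj2 C Y1 Y2) (mat C X1 X2 Y1 Y2 a b c d) = row C X1 X2 c d"
proof -
  note s = bs[OF hom_ob1[OF a] hom_ob1[OF b]]
  note t = bs[OF hom_ob2[OF a] hom_ob2[OF c]]
  have c1: "ccomp C (col C Y1 Y2 a c) (bprj1 C X1 X2) \<in> hom C (bobj C X1 X2) (bobj C Y1 Y2)"
    using col_hom[OF a c] s by blast
  have c2: "ccomp C (col C Y1 Y2 b d) (bprj2 C X1 X2) \<in> hom C (bobj C X1 X2) (bobj C Y1 Y2)"
    using col_hom[OF b d] s by blast
  show ?thesis unfolding mat_def row_def
    using comp_add_l[OF c1 c2 t(5)] assoc[OF s(4) col_hom[OF a c] t(5), symmetric]
      assoc[OF s(5) col_hom[OF b d] t(5), symmetric] col_p2[OF a c] col_p2[OF b d] by simp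
qed

lemma zobj_zero: "is_zero_obj C (zobj C)"
  unfolding zobj_def using abD by (metis someI_ex)

lemma zobj_ob: "zobj C \<in> Ob C"
  using zobj_zero unfolding is_zero_obj_def by blast

lemma to_zobj: assumes x: "x \<in> hom C T (zobj C)" shows "x = zer C T (zobj C)"
proof -
  have T: "T \<in> Ob C" using hom_ob1[OF x] .
  have "\<exists>!u. u \<in> hom C T (zobj C)" using zobj_zero T unfolding is_zero_obj_def by blast
  then show ?thesis using x zer_hom[OF T zobj_ob] by blast
qed

lemma from_zobj: assumes x: "x \<in> hom C (zobj C) T" shows "x = zer C (zobj C) T"
proof -
  have T: "T \<in> Ob C" using hom_ob2[OF x] .
  have "\<exists>!u. u \<in> hom C (zobj C) T" using zobj_zero T unfolding is_zero_obj_def by blast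
  then show ?thesis using x zer_hom[OF zobj_ob T] by blast
qed

lemma bcol: assumes X1: "X1 \<in> Ob C" and X2: "X2 \<in> Ob C" and z: "z \<in> hom C T (bobj C X1 X2)"
  shows "col C X1 X2 (ccomp C (bprj1 C X1 X2) z) (ccomp C (bprj2 C X1 X2) z) = z"
proof -
  note s = bs[OF X1 X2]
  have a: "ccomp C (bprj1 C X1 X2) z \<in> hom C T X1" using z s by blast
  have b: "ccomp C (bprj2 C X1 X2) z \<in> hom C T X2" using z s by blast
  show ?thesis by (rule bext[OF X1 X2 col_hom[OF a b] z]) (simp_all add: col_p1[OF a b] col_p2[OF a b])
qed

lemma row_comp: assumes a: "a \<in> hom C X1 Y" and b: "b \<in> hom C X2 Y" and z: "z \<in> hom C T (bobj C X1 X2)"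
  shows "ccomp C (row C X1 X2 a b) z = madd C (ccomp C a (ccomp C (bprj1 C X1 X2) z)) (ccomp C b (ccomp C (bprj2 C X1 X2) z))"
proof -
  have X1: "X1 \<in> Ob C" using hom_ob1[OF a] . have X2: "X2 \<in> Ob C" using hom_ob1[OF b] .
  note s = bs[OF X1 X2]
  have x: "ccomp C (bprj1 C X1 X2) z \<in> hom C T X1" using z s by blast
  have y: "ccomp C (bprj2 C X1 X2) z \<in> hom C T X2" using z s by blast
  show ?thesis using row_col[OF a b x y] bcol[OF X1 X2 z] by simp
qed

lemma col_zer: assumes Y1: "Y1 \<in> Ob C" and Y2: "Y2 \<in> Ob C" and T: "T \<in> Ob C"
  shows "col C Y1 Y2 (zer C T Y1) (zer C T Y2) = zer C T (bobj C Y1 Y2)"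
proof -
  note s = bs[OF Y1 Y2]
  have a: "zer C T Y1 \<in> hom C T Y1" using T Y1 by blast
  have b: "zer C T Y2 \<in> hom C T Y2" using T Y2 by blast
  show ?thesis
    by (rule bext[OF Y1 Y2 col_hom[OF a b] zer_hom[OF T s(1)]])
       (simp_all add: col_p1[OF a b] col_p2[OF a b] comp_zer_r[OF s(4) T] comp_zer_r[OF s(5) T])
qed

section \<open>Generic mapping cone\<close>

definition ctyped :: "nat \<Rightarrow> (nat \<Rightarrow> 'o) \<Rightarrow> (nat \<Rightarrow> 'o) \<Rightarrow> (nat \<Rightarrow> 'm) \<Rightarrow> (nat \<Rightarrow> 'm) \<Rightarrow> (nat \<Rightarrow> 'm) \<Rightarrow> bool" where
  "ctyped n X Y dX dY h \<longleftrightarrow> 1 \<le> n \<and> (\<forall>j\<le>n. X j \<in> Ob C \<and> Y j \<in> Ob C \<and> h j \<in> hom C (X j) (Y j)) \<and>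
     (\<forall>j<n. dX j \<in> hom C (X j) (X (Suc j)) \<and> dY j \<in> hom C (Y j) (Y (Suc j)))"

context
  fixes n X Y dX dY h
  assumes ct: "ctyped n X Y dX dY h"
begin

lemma ct_n: "1 \<le> n" using ct ctyped_def by blast
lemma ct_X: "j \<le> n \<Longrightarrow> X j \<in> Ob C" using ct ctyped_def by blast
lemma ct_Y: "j \<le> n \<Longrightarrow> Y j \<in> Ob C" using ct ctyped_def by blast
lemma ct_h: "j \<le> n \<Longrightarrow> h j \<in> hom C (X j) (Y j)" using ct ctyped_def by blast
lemma ct_dX: "j < n \<Longrightarrow> dX j \<in> hom C (X j) (X (Suc j))" using ct ctyped_def by blast
lemma ct_dY: "j < n \<Longrightarrow> dY j \<in> hom C (Y j) (Y (Suc j))" using ct ctyped_def by blast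

lemma cd0: "cone_d C n X Y dX dY h 0 = col C (X 1) (Y 0) (mneg C (dX 0)) (h 0)"
  by (simp add: cone_d_def)
lemma cdm: "0 < j \<Longrightarrow> j < n \<Longrightarrow> cone_d C n X Y dX dY h j =
   mat C (X j) (Y (j - 1)) (X (Suc j)) (Y j) (mneg C (dX j)) (zer C (Y (j - 1)) (X (Suc j))) (h j) (dY (j - 1))"
  by (simp add: cone_d_def)
lemma cdn: "cone_d C n X Y dX dY h n = row C (X n) (Y (n - 1)) (h n) (dY (n - 1))"
  using ct_n by (simp add: cone_d_def)

lemma cd0_hom: "cone_d C n X Y dX dY h 0 \<in> hom C (X 0) (bobj C (X 1) (Y 0))"
  unfolding cd0 using ct_dX[of 0] ct_h[of 0] ct_n by (intro col_hom) auto

lemma cdm_hom: assumes "0 < j" "j < n"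
  shows "cone_d C n X Y dX dY h j \<in> hom C (bobj C (X j) (Y (j - 1))) (bobj C (X (Suc j)) (Y j))"
proof -
  have a: "mneg C (dX j) \<in> hom C (X j) (X (Suc j))" using ct_dX assms by blast
  have c: "h j \<in> hom C (X j) (Y j)" using ct_h assms by simp
  have d: "dY (j - 1) \<in> hom C (Y (j - 1)) (Y j)" using ct_dY[of "j - 1"] assms by simp
  have b: "zer C (Y (j - 1)) (X (Suc j)) \<in> hom C (Y (j - 1)) (X (Suc j))"
    using hom_ob1[OF d] hom_ob2[OF a] by blast
  show ?thesis unfolding cdm[OF assms] by (rule mat_hom[OF a b c d])
qed

lemma cdn_hom: "cone_d C n X Y dX dY h n \<in> hom C (bobj C (X n) (Y (n - 1))) (Y n)"
proof -
  have c: "h n \<in> hom C (X n) (Y n)" using ct_h by simp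
  have d: "dY (n - 1) \<in> hom C (Y (n - 1)) (Y n)" using ct_dY[of "n - 1"] ct_n by simp
  show ?thesis unfolding cdn by (rule row_hom[OF c d])
qed

lemma P0: assumes x: "x \<in> hom C T (X 0)"
  shows "ccomp C (bprj1 C (X 1) (Y 0)) (ccomp C (cone_d C n X Y dX dY h 0) x) = mneg C (ccomp C (dX 0) x)"
    "ccomp C (bprj2 C (X 1) (Y 0)) (ccomp C (cone_d C n X Y dX dY h 0) x) = ccomp C (h 0) x"
proof -
  have a: "mneg C (dX 0) \<in> hom C (X 0) (X 1)" using ct_dX[of 0] ct_n by auto
  have c: "h 0 \<in> hom C (X 0) (Y 0)" using ct_h by simp
  note s = bs[OF hom_ob2[OF a] hom_ob2[OF c]]
  show "ccomp C (bprj1 C (X 1) (Y 0)) (ccomp C (cone_d C n X Y dX dY h 0) x) = mneg C (ccomp C (dX 0) x)"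
    unfolding cd0 using assoc[OF x col_hom[OF a c] s(4), symmetric] col_p1[OF a c]
      comp_neg_l[OF x] ct_dX[of 0] ct_n by auto
  show "ccomp C (bprj2 C (X 1) (Y 0)) (ccomp C (cone_d C n X Y dX dY h 0) x) = ccomp C (h 0) x"
    unfolding cd0 using assoc[OF x col_hom[OF a c] s(5), symmetric] col_p2[OF a c] by auto
qed

lemma Pm: assumes j: "0 < j" "j < n" and z: "z \<in> hom C T (bobj C (X j) (Y (j - 1)))"
  shows "ccomp C (bprj1 C (X (Suc j)) (Y j)) (ccomp C (cone_d C n X Y dX dY h j) z) =
           mneg C (ccomp C (dX j) (ccomp C (bprj1 C (X j) (Y (j - 1))) z))"
    "ccomp C (bprj2 C (X (Suc j)) (Y j)) (ccomp C (cone_d C n X Y dX dY h j) z) =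
           madd C (ccomp C (h j) (ccomp C (bprj1 C (X j) (Y (j - 1))) z))
                  (ccomp C (dY (j - 1)) (ccomp C (bprj2 C (X j) (Y (j - 1))) z))"
proof -
  have dx: "dX j \<in> hom C (X j) (X (Suc j))" using ct_dX j by blast
  have a: "mneg C (dX j) \<in> hom C (X j) (X (Suc j))" using dx by blast
  have c: "h j \<in> hom C (X j) (Y j)" using ct_h j by simp
  have d: "dY (j - 1) \<in> hom C (Y (j - 1)) (Y j)" using ct_dY[of "j - 1"] j by simp
  have b: "zer C (Y (j - 1)) (X (Suc j)) \<in> hom C (Y (j - 1)) (X (Suc j))"
    using hom_ob1[OF d] hom_ob2[OF a] by blast
  note t = bs[OF hom_ob2[OF a] hom_ob2[OF c]]
  note s = bs[OF hom_ob1[OF a] hom_ob1[OF d]]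
  have z1: "ccomp C (bprj1 C (X j) (Y (j - 1))) z \<in> hom C T (X j)" using z s by blast
  have z2: "ccomp C (bprj2 C (X j) (Y (j - 1))) z \<in> hom C T (Y (j - 1))" using z s by blast
  have T: "T \<in> Ob C" using hom_ob1[OF z] .
  show "ccomp C (bprj1 C (X (Suc j)) (Y j)) (ccomp C (cone_d C n X Y dX dY h j) z) =
           mneg C (ccomp C (dX j) (ccomp C (bprj1 C (X j) (Y (j - 1))) z))"
    unfolding cdm[OF j] using assoc[OF z mat_hom[OF a b c d] t(4), symmetric] mat_p1[OF a b c d]
      row_comp[OF a b z] comp_neg_l[OF z1 dx] comp_zer_l[OF z2 hom_ob2[OF a]]
      add_zer[OF neg_hom[OF comp_hom[OF z1 dx]]] by simp
  show "ccomp C (bprj2 C (X (Suc j)) (Y j)) (ccomp C (cone_d C n X Y dX dY h j) z) =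
           madd C (ccomp C (h j) (ccomp C (bprj1 C (X j) (Y (j - 1))) z))
                  (ccomp C (dY (j - 1)) (ccomp C (bprj2 C (X j) (Y (j - 1))) z))"
    unfolding cdm[OF j] using assoc[OF z mat_hom[OF a b c d] t(5), symmetric] mat_p2[OF a b c d]
      row_comp[OF c d z] by simp
qed

lemma Pn: assumes z: "z \<in> hom C T (bobj C (X n) (Y (n - 1)))"
  shows "ccomp C (cone_d C n X Y dX dY h n) z =
           madd C (ccomp C (h n) (ccomp C (bprj1 C (X n) (Y (n - 1))) z))
                  (ccomp C (dY (n - 1)) (ccomp C (bprj2 C (X n) (Y (n - 1))) z))"
proof -
  have c: "h n \<in> hom C (X n) (Y n)" using ct_h by simp
  have d: "dY (n - 1) \<in> hom C (Y (n - 1)) (Y n)" using ct_dY[of "n - 1"] ct_n by simp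
  show ?thesis unfolding cdn using row_comp[OF c d z] .
qed

end

end


locale S = ab C for C :: "('o, 'm) cat" +
  fixes n :: nat
    and A :: "nat \<Rightarrow> 'o"
    and B :: "nat \<Rightarrow> nat \<Rightarrow> 'o"
    and f :: "nat \<Rightarrow> 'm"
    and g p :: "nat \<Rightarrow> nat \<Rightarrow> 'm"
  assumes n1: "n \<ge> 1"
    and objA: "\<forall>k\<le>Suc n. A k \<in> Ob C"
    and objB: "\<forall>k\<le>Suc n. \<forall>l\<in>{1..n}. B k l \<in> Ob C"
    and B0: "\<forall>k\<le>Suc n. B k 0 = A k"
    and f_hom: "\<forall>k\<le>n. f k \<in> hom C (A k) (A (Suc k))"
    and g_hom: "\<forall>k\<le>Suc n. \<forall>l\<in>{1..n}. g k l \<in> hom C (B k l) (B k (l - 1))"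
    and p_hom: "\<forall>k\<le>n. \<forall>l<n. p k l \<in> hom C (B k l) (B (Suc k) (Suc l))"
    and rel_f: "\<forall>k\<le>n. f k = ccomp C (g (Suc k) 1) (p k 0)"
    and rel_gp: "\<forall>k\<le>n. \<forall>l\<in>{1..n - 1}.
                   ccomp C (g (Suc k) (Suc l)) (p k l) = ccomp C (p k (l - 1)) (g k l)"
    and rel_0: "\<forall>k\<le>n. ccomp C (p k (n - 1)) (g k n) = zer C (B k n) (B (Suc k) n)"
    and hyp_a: "is_mono C (g (Suc n) n) \<and>
                (\<forall>l\<in>{1..n - 1}. exact C (g (Suc n) (Suc l)) (g (Suc n) l)) \<and>
                is_epi C (g (Suc n) 1)"
    and hyp_b: "\<forall>k\<le>n.
       (let X = (\<lambda>j. B k (n - j));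
            dX = (\<lambda>j. g k (n - j));
            Y = (\<lambda>j. if j = 0 then zobj C else B (Suc k) (Suc n - j));
            dY = (\<lambda>j. if j = 0 then zer C (zobj C) (B (Suc k) n) else g (Suc k) (Suc n - j));
            h = (\<lambda>j. if j = 0 then zer C (B k n) (zobj C) else p k (n - j))
        in is_mono C (cone_d C n X Y dX dY h 0) \<and>
           (\<forall>j\<in>{1..n}. exact C (cone_d C n X Y dX dY h (j - 1)) (cone_d C n X Y dX dY h j)))"
begin

definition "XX k = (\<lambda>j. B k (n - j))"
definition "dXX k = (\<lambda>j. g k (n - j))"
definition "YY k = (\<lambda>j. if j = 0 then zobj C else B (Suc k) (Suc n - j))"
definition "dYY k = (\<lambda>j. if j = 0 then zer C (zobj C) (B (Suc k) n) else g (Suc k) (Suc n - j))"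
definition "hh k = (\<lambda>j. if j = 0 then zer C (B k n) (zobj C) else p k (n - j))"
abbreviation "cd k \<equiv> cone_d C n (XX k) (YY k) (dXX k) (dYY k) (hh k)"

lemma hb: assumes "k \<le> n"
  shows "is_mono C (cd k 0)" "\<And>j. 1 \<le> j \<Longrightarrow> j \<le> n \<Longrightarrow> exact C (cd k (j - 1)) (cd k j)"
  using hyp_b assms unfolding Let_def XX_def dXX_def YY_def dYY_def hh_def by auto

lemma Bob: "k \<le> Suc n \<Longrightarrow> l \<le> n \<Longrightarrow> B k l \<in> Ob C"
  using objA objB B0 by (cases "l = 0") auto
lemma Aob: "k \<le> Suc n \<Longrightarrow> A k \<in> Ob C"
  using objA by auto
lemma BA: "k \<le> Suc n \<Longrightarrow> B k 0 = A k" using B0 by auto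
lemma gh: "k \<le> Suc n \<Longrightarrow> 0 < l \<Longrightarrow> l \<le> n \<Longrightarrow> g k l \<in> hom C (B k l) (B k (l - 1))"
  using g_hom by auto
lemma ph: "k \<le> n \<Longrightarrow> l < n \<Longrightarrow> p k l \<in> hom C (B k l) (B (Suc k) (Suc l))"
  using p_hom by auto
lemma fh: "k \<le> n \<Longrightarrow> f k \<in> hom C (A k) (A (Suc k))"
  using f_hom by auto

lemma ctk: assumes k: "k \<le> n" shows "ctyped n (XX k) (YY k) (dXX k) (dYY k) (hh k)"
  unfolding ctyped_def
proof (intro conjI allI impI)
  show "1 \<le> n" using n1 .
  fix j assume j: "j \<le> n"
  show "XX k j \<in> Ob C" unfolding XX_def using Bob k by simp
  show "YY k j \<in> Ob C" unfolding YY_def using Bob k zobj_ob by simp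
  show "hh k j \<in> hom C (XX k j) (YY k j)"
  proof (cases "j = 0")
    case True
    have "zer C (B k n) (zobj C) \<in> hom C (B k n) (zobj C)" using zer_hom Bob[of k n] k zobj_ob by simp
    with True show ?thesis unfolding hh_def XX_def YY_def by simp
  next
    case False then show ?thesis unfolding hh_def XX_def YY_def using ph[of k "n - j"] k j
      by (simp add: Suc_diff_le)
  qed
next
  fix j assume j: "j < n"
  show "dXX k j \<in> hom C (XX k j) (XX k (Suc j))" unfolding dXX_def XX_def
    using gh[of k "n - j"] k j by (simp add: diff_Suc)
  show "dYY k j \<in> hom C (YY k j) (YY k (Suc j))"
  proof (cases "j = 0")
    case True
    have "zer C (zobj C) (B (Suc k) n) \<in> hom C (zobj C) (B (Suc k) n)" using zer_hom Bob[of "Suc k" n] k zobj_ob by simp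
    with True show ?thesis unfolding dYY_def YY_def by simp
  next
    case False then show ?thesis unfolding dYY_def YY_def using gh[of "Suc k" "Suc n - j"] k j
      by simp
  qed
qed

lemma mono_top: assumes k: "k \<le> Suc n" and x: "x \<in> hom C T (B k n)"
  and gx: "ccomp C (g k n) x = zer C T (B k (n - 1))" shows "x = zer C T (B k n)"
proof (cases "k = Suc n")
  case True
  have x': "x \<in> hom C T (B (Suc n) n)" using x True by simp
  show ?thesis using mono_zero[OF conjunct1[OF hyp_a] gh[of "Suc n" n] x'] gx n1 True by simp
next
  case False
  then have k: "k \<le> n" using k by simp
  note ct = ctk[OF k]
  have x0: "x \<in> hom C T (XX k 0)" using x unfolding XX_def by simp
  have T: "T \<in> Ob C" using hom_ob1[OF x] .
  have X1: "XX k 1 \<in> Ob C" using ct_X[OF ct, of 1] n1 by simp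
  have Y0: "YY k 0 \<in> Ob C" using ct_Y[OF ct, of 0] by simp
  note s = bs[OF X1 Y0]
  have c: "ccomp C (cd k 0) x \<in> hom C T (bobj C (XX k 1) (YY k 0))"
    using cd0_hom[OF ct] x0 by blast
  have "ccomp C (bprj1 C (XX k 1) (YY k 0)) (ccomp C (cd k 0) x) = mneg C (ccomp C (g k n) x)"
    using P0(1)[OF ct x0] unfolding dXX_def by simp
  also have "\<dots> = zer C T (XX k 1)" using gx neg_zer[OF T] Bob k n1 unfolding XX_def by simp
  finally have e1: "ccomp C (bprj1 C (XX k 1) (YY k 0)) (ccomp C (cd k 0) x) = zer C T (XX k 1)" .
  have "ccomp C (bprj2 C (XX k 1) (YY k 0)) (ccomp C (cd k 0) x) \<in> hom C T (zobj C)"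
    using c s unfolding YY_def by auto
  then have e2: "ccomp C (bprj2 C (XX k 1) (YY k 0)) (ccomp C (cd k 0) x) = zer C T (YY k 0)"
    using to_zobj unfolding YY_def by simp
  have "ccomp C (cd k 0) x = zer C T (bobj C (XX k 1) (YY k 0))"
    by (rule bext[OF X1 Y0 c zer_hom[OF T s(1)]])
       (use e1 e2 comp_zer_r[OF s(4) T] comp_zer_r[OF s(5) T] in \<open>simp_all add: One_nat_def\<close>)
  then show ?thesis using mono_zero[OF hb(1)[OF k] cd0_hom[OF ct] x0] unfolding XX_def by simp
qed


lemma cone_ex: assumes k: "k \<le> n" and l: "l < n" and x: "x \<in> hom C T (B k l)"
  and gx: "0 < l \<Longrightarrow> ccomp C (g k l) x = zer C T (B k (l - 1))"
  and y: "y \<in> hom C T (YY k (n - Suc l))"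
  and px: "ccomp C (p k l) x = ccomp C (dYY k (n - Suc l)) y"
  shows "\<exists>T' e t. e \<in> hom C T' T \<and> is_epi C e \<and> t \<in> hom C T' (B k (Suc l)) \<and>
           ccomp C x e = ccomp C (g k (Suc l)) t"
proof -
  note ct = ctk[OF k]
  define i where "i = n - Suc l"
  have si: "Suc i = n - l" "Suc i \<le> n" using i_def l by auto
  have Xi: "XX k (Suc i) = B k l" using si unfolding XX_def by simp
  have hi: "hh k (Suc i) = p k l" using si l unfolding hh_def by simp
  have xX: "x \<in> hom C T (XX k (Suc i))" using x Xi by simp
  have yY: "y \<in> hom C T (YY k i)" using y i_def by simp
  have dYi: "dYY k i \<in> hom C (YY k i) (YY k (Suc i))" using ct_dY[OF ct, of i] si by simp
  have T: "T \<in> Ob C" using hom_ob1[OF x] .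
  have XO: "XX k (Suc i) \<in> Ob C" using ct_X[OF ct] si by simp
  have YO: "YY k i \<in> Ob C" using ct_Y[OF ct] si by simp
  note s = bs[OF XO YO]
  define z where "z = col C (XX k (Suc i)) (YY k i) x (mneg C y)"
  have ny: "mneg C y \<in> hom C T (YY k i)" using yY by blast
  have zh: "z \<in> hom C T (bobj C (XX k (Suc i)) (YY k i))" unfolding z_def using col_hom[OF xX ny] .
  have z1: "ccomp C (bprj1 C (XX k (Suc i)) (YY k i)) z = x" unfolding z_def using col_p1[OF xX ny] .
  have z2: "ccomp C (bprj2 C (XX k (Suc i)) (YY k i)) z = mneg C y" unfolding z_def using col_p2[OF xX ny] .
  have hx: "ccomp C (hh k (Suc i)) x \<in> hom C T (YY k (Suc i))" using ct_h[OF ct] si xX by blast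
  have pxdy: "madd C (ccomp C (hh k (Suc i)) x) (ccomp C (dYY k i) (mneg C y)) = zer C T (YY k (Suc i))"
    using hi px i_def comp_neg_r[OF yY dYi] add_neg[OF comp_hom[OF yY dYi]] by simp
  define Tj where "Tj = (if Suc i < n then bobj C (XX k (Suc (Suc i))) (YY k (Suc i)) else YY k n)"
  have cdh: "cd k (Suc i) \<in> hom C (bobj C (XX k (Suc i)) (YY k i)) Tj"
  proof (cases "Suc i < n")
    case True then show ?thesis using cdm_hom[OF ct, of "Suc i"] Tj_def by simp
  next
    case False then have "Suc i = n" using si by simp
    then show ?thesis using cdn_hom[OF ct] Tj_def by (metis diff_Suc_1 lessI less_irrefl)
  qed
  have cz: "ccomp C (cd k (Suc i)) z = zer C T Tj"
  proof (cases "Suc i < n")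
    case True
    have l0: "0 < l" using True si by simp
    have X2: "XX k (Suc (Suc i)) \<in> Ob C" using ct_X[OF ct] True by simp
    have Y1: "YY k (Suc i) \<in> Ob C" using ct_Y[OF ct] si by simp
    note t = bs[OF X2 Y1]
    have zh': "z \<in> hom C T (bobj C (XX k (Suc i)) (YY k (Suc i - 1)))" using zh by simp
    have cz': "ccomp C (cd k (Suc i)) z \<in> hom C T (bobj C (XX k (Suc (Suc i))) (YY k (Suc i)))"
      using cdh zh True Tj_def by auto
    have dx: "dXX k (Suc i) = g k l" unfolding dXX_def using si by simp
    have X2': "XX k (Suc (Suc i)) = B k (l - 1)" unfolding XX_def using si by simp
    have e1: "ccomp C (bprj1 C (XX k (Suc (Suc i))) (YY k (Suc i))) (ccomp C (cd k (Suc i)) z) =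
        zer C T (XX k (Suc (Suc i)))"
      using Pm(1)[OF ct _ True zh'] z1 dx gx[OF l0] X2' neg_zer[OF T] hom_ob2[OF gh[of k l]] k l l0
      by simp
    have e2: "ccomp C (bprj2 C (XX k (Suc (Suc i))) (YY k (Suc i))) (ccomp C (cd k (Suc i)) z) =
        zer C T (YY k (Suc i))"
      using Pm(2)[OF ct _ True zh'] z1 z2 pxdy by simp
    have "ccomp C (cd k (Suc i)) z = zer C T (bobj C (XX k (Suc (Suc i))) (YY k (Suc i)))"
      by (rule bext[OF X2 Y1 cz' zer_hom[OF T t(1)]])
         (simp_all add: e1 e2 comp_zer_r[OF t(4) T] comp_zer_r[OF t(5) T])
    then show ?thesis unfolding Tj_def using True by simp
  next
    case False then have sn: "Suc i = n" using si by simp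
    have zh': "z \<in> hom C T (bobj C (XX k n) (YY k (n - 1)))" using zh sn by auto
    have "ccomp C (cd k n) z = madd C (ccomp C (hh k n) x) (ccomp C (dYY k (n - 1)) (mneg C y))"
      using Pn[OF ct zh'] z1 z2 sn by auto
    then show ?thesis using pxdy sn Tj_def by auto
  qed
  define Sj where "Sj = (if i = 0 then XX k 0 else bobj C (XX k i) (YY k (i - 1)))"
  have cdh': "cd k i \<in> hom C Sj (bobj C (XX k (Suc i)) (YY k i))"
  proof (cases "i = 0")
    case True then show ?thesis using cd0_hom[OF ct] Sj_def by simp
  next
    case False then show ?thesis using cdm_hom[OF ct, of i] Sj_def si by simp
  qed
  have ex: "exact C (cd k i) (cd k (Suc i))" using hb(2)[OF k, of "Suc i"] si by (simp del: diff_Suc_Suc add: i_def)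
  obtain T' e w where ew: "e \<in> hom C T' T" "is_epi C e" "w \<in> hom C T' Sj"
    "ccomp C (cd k i) w = ccomp C z e"
    using exact_imp[OF ex cdh' cdh zh cz] by blast
  have xe: "ccomp C (bprj1 C (XX k (Suc i)) (YY k i)) (ccomp C (cd k i) w) = ccomp C x e"
    using ew(4) assoc[OF ew(1) zh s(4), symmetric] z1 by simp
  show ?thesis
  proof (cases "i = 0")
    case True
    have w: "w \<in> hom C T' (XX k 0)" using ew(3) True Sj_def by simp
    have sl: "Suc l = n" using True i_def l by simp
    have gk: "g k n \<in> hom C (XX k 0) (XX k 1)" using gh[of k n] k n1 unfolding XX_def by simp
    have "ccomp C x e = mneg C (ccomp C (g k n) w)"
      using xe P0(1)[OF ct w] True unfolding dXX_def by simp
    also have "\<dots> = ccomp C (g k n) (mneg C w)" using comp_neg_r[OF w gk] by simp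
    finally show ?thesis using ew(1,2) neg_hom[OF w] sl unfolding XX_def by auto
  next
    case False
    have i0: "0 < i" "i < n" using False si by auto
    have w: "w \<in> hom C T' (bobj C (XX k i) (YY k (i - 1)))" using ew(3) False Sj_def by simp
    have XiO: "XX k i \<in> Ob C" using ct_X[OF ct] i0 by simp
    have Yi1O: "YY k (i - 1) \<in> Ob C" using ct_Y[OF ct] i0 by simp
    note r = bs[OF XiO Yi1O]
    have w1: "ccomp C (bprj1 C (XX k i) (YY k (i - 1))) w \<in> hom C T' (XX k i)" using w r by blast
    have Xi': "XX k i = B k (Suc l)" unfolding XX_def using i_def l by simp
    have dxi: "dXX k i = g k (Suc l)" unfolding dXX_def using i_def l by simp
    have gk: "g k (Suc l) \<in> hom C (XX k i) (XX k (Suc i))"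
      using ct_dX[OF ct, of i] i0 dxi by simp
    have "ccomp C x e = mneg C (ccomp C (g k (Suc l)) (ccomp C (bprj1 C (XX k i) (YY k (i - 1))) w))"
      using xe Pm(1)[OF ct i0 w] dxi by simp
    also have "\<dots> = ccomp C (g k (Suc l)) (mneg C (ccomp C (bprj1 C (XX k i) (YY k (i - 1))) w))"
      using comp_neg_r[OF w1 gk] by simp
    finally show ?thesis using ew(1,2) neg_hom[OF w1] Xi' by auto
  qed
qed


lemma gg: assumes k: "k \<le> Suc n" and l: "0 < l" "Suc l \<le> n"
  shows "ccomp C (g k l) (g k (Suc l)) = zer C (B k (Suc l)) (B k (l - 1))"
proof (cases "k = Suc n")
  case True
  have ex: "exact C (g (Suc n) (Suc l)) (g (Suc n) l)" using hyp_a l by auto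
  have g1: "g (Suc n) (Suc l) \<in> hom C (B (Suc n) (Suc l)) (B (Suc n) l)" using gh[of "Suc n" "Suc l"] l by simp
  have g2: "g (Suc n) l \<in> hom C (B (Suc n) l) (B (Suc n) (l - 1))" using gh[of "Suc n" l] l by simp
  show ?thesis using exact_comp[OF ex g1 g2] True by simp
next
  case False
  then have k: "k \<le> n" using k by simp
  note ct = ctk[OF k]
  define i where "i = n - Suc l"
  have si: "Suc i = n - l" "Suc i < n" using i_def l by auto
  have ex: "exact C (cd k i) (cd k (Suc i))" using hb(2)[OF k, of "Suc i"] si
    by (simp del: diff_Suc_Suc add: i_def)
  have dx1: "dXX k (Suc i) = g k l" unfolding dXX_def using si by simp
  have dx0: "dXX k i = g k (Suc l)" unfolding dXX_def using i_def l by simp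
  have dXi: "dXX k i \<in> hom C (XX k i) (XX k (Suc i))" using ct_dX[OF ct, of i] si by linarith
  have dXsi: "dXX k (Suc i) \<in> hom C (XX k (Suc i)) (XX k (Suc (Suc i)))" using ct_dX[OF ct, of "Suc i"] si by linarith
  have XO: "XX k (Suc i) \<in> Ob C" using ct_X[OF ct] si by simp
  have YO: "YY k i \<in> Ob C" using ct_Y[OF ct] si by simp
  have X2: "XX k (Suc (Suc i)) \<in> Ob C" using ct_X[OF ct] si by simp
  have Y1: "YY k (Suc i) \<in> Ob C" using ct_Y[OF ct] si by simp
  note s = bs[OF XO YO]
  note t = bs[OF X2 Y1]
  have cdh: "cd k (Suc i) \<in> hom C (bobj C (XX k (Suc i)) (YY k i)) (bobj C (XX k (Suc (Suc i))) (YY k (Suc i)))"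
    using cdm_hom[OF ct, of "Suc i"] si(2) by simp
  obtain q Sj where q: "q \<in> hom C (XX k i) Sj" and cdi: "cd k i \<in> hom C Sj (bobj C (XX k (Suc i)) (YY k i))"
    and pw: "ccomp C (bprj1 C (XX k (Suc i)) (YY k i)) (ccomp C (cd k i) q) = mneg C (dXX k i)"
  proof (cases "i = 0")
    case True
    have X0: "XX k 0 \<in> Ob C" using ct_X[OF ct] by simp
    have "ccomp C (bprj1 C (XX k (Suc i)) (YY k i)) (ccomp C (cd k i) (cid C (XX k 0))) = mneg C (dXX k i)"
      using P0(1)[OF ct id_hom[OF X0]] id_r[OF ct_dX[OF ct, of 0]] n1 True by simp
    moreover have "cd k i \<in> hom C (XX k 0) (bobj C (XX k (Suc i)) (YY k i))" using cd0_hom[OF ct] True by simp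
    ultimately show ?thesis using that[of "cid C (XX k 0)"] id_hom[OF X0] True by blast
  next
    case False
    have i0: "0 < i" "i < n" using False si by auto
    have XiO: "XX k i \<in> Ob C" using ct_X[OF ct] i0 by simp
    have Yi1O: "YY k (i - 1) \<in> Ob C" using ct_Y[OF ct] i0 by simp
    note r = bs[OF XiO Yi1O]
    have "ccomp C (bprj1 C (XX k (Suc i)) (YY k i)) (ccomp C (cd k i) (binj1 C (XX k i) (YY k (i - 1)))) = mneg C (dXX k i)"
      using Pm(1)[OF ct i0 r(2)] r(6) id_r[OF ct_dX[OF ct, of i]] i0 by simp
    moreover have "cd k i \<in> hom C (bobj C (XX k i) (YY k (i - 1))) (bobj C (XX k (Suc i)) (YY k i))"
      using cdm_hom[OF ct i0] by simp
    ultimately show ?thesis using that r(2) by blast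
  qed
  define Q where "Q = XX k i"
  have w: "ccomp C (cd k i) q \<in> hom C Q (bobj C (XX k (Suc i)) (YY k i))" using q cdi Q_def by blast
  have Q: "Q \<in> Ob C" using hom_ob1[OF q] Q_def by simp
  have q': "q \<in> hom C Q Sj" using q Q_def by simp
  have cc: "ccomp C (cd k (Suc i)) (cd k i) = zer C Sj (bobj C (XX k (Suc (Suc i))) (YY k (Suc i)))"
    using exact_comp[OF ex cdi cdh] .
  have "ccomp C (cd k (Suc i)) (ccomp C (cd k i) q) = zer C Q (bobj C (XX k (Suc (Suc i))) (YY k (Suc i)))"
    using assoc[OF q' cdi cdh, symmetric] cc comp_zer_l[OF q' t(1)] by simp
  then have "zer C Q (XX k (Suc (Suc i))) =
      ccomp C (bprj1 C (XX k (Suc (Suc i))) (YY k (Suc i))) (ccomp C (cd k (Suc i)) (ccomp C (cd k i) q))"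
    using comp_zer_r[OF t(4) Q] by simp
  also have "\<dots> = mneg C (ccomp C (dXX k (Suc i)) (mneg C (dXX k i)))"
    using Pm(1)[OF ct _ si(2), of "ccomp C (cd k i) q"] w pw by simp
  also have "\<dots> = ccomp C (dXX k (Suc i)) (dXX k i)"
    using comp_neg_r[OF dXi dXsi] neg_neg[OF comp_hom[OF dXi dXsi]] by simp
  finally have e: "ccomp C (dXX k (Suc i)) (dXX k i) = zer C Q (XX k (Suc (Suc i)))" by simp
  have "XX k i = B k (Suc l)" "XX k (Suc (Suc i)) = B k (l - 1)" unfolding XX_def using i_def l si by auto
  then show ?thesis using e dx0 dx1 Q_def by simp
qed


lemma Qlem_aux:
  "\<forall>k l T x. Suc n - k = m \<longrightarrow> k \<le> Suc n \<longrightarrow> 0 < l \<longrightarrow> l < n \<longrightarrow> x \<in> hom C T (B k l) \<longrightarrow>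
     ccomp C (g k l) x = zer C T (B k (l - 1)) \<longrightarrow>
     (\<exists>T' e t. e \<in> hom C T' T \<and> is_epi C e \<and> t \<in> hom C T' (B k (Suc l)) \<and>
           ccomp C x e = ccomp C (g k (Suc l)) t)"
proof (induction m)
  case 0
  show ?case
  proof (intro allI impI)
    fix k l T x assume a: "Suc n - k = 0" "k \<le> Suc n" "0 < l" "l < n" "x \<in> hom C T (B k l)"
      "ccomp C (g k l) x = zer C T (B k (l - 1))"
    have k: "k = Suc n" using a by simp
    have ex: "exact C (g (Suc n) (Suc l)) (g (Suc n) l)" using hyp_a a by auto
    have g1: "g (Suc n) (Suc l) \<in> hom C (B (Suc n) (Suc l)) (B (Suc n) l)" using gh[of "Suc n" "Suc l"] a by simp
    have g2: "g (Suc n) l \<in> hom C (B (Suc n) l) (B (Suc n) (l - 1))" using gh[of "Suc n" l] a by simp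
    show "\<exists>T' e t. e \<in> hom C T' T \<and> is_epi C e \<and> t \<in> hom C T' (B k (Suc l)) \<and>
           ccomp C x e = ccomp C (g k (Suc l)) t"
      using exact_imp[OF ex g1 g2, of x T] a k by metis
  qed
next
  case (Suc m)
  show ?case
  proof (intro allI impI)
    fix k l T x assume a: "Suc n - k = Suc m" "k \<le> Suc n" "0 < l" "l < n" and x: "x \<in> hom C T (B k l)"
      and gx: "ccomp C (g k l) x = zer C T (B k (l - 1))"
    have k: "k \<le> n" using a by simp
    have T: "T \<in> Ob C" using hom_ob1[OF x] .
    have pkl: "p k l \<in> hom C (B k l) (B (Suc k) (Suc l))" using ph k a by simp
    have pxh: "ccomp C (p k l) x \<in> hom C T (B (Suc k) (Suc l))" using pkl x by blast
    have gk: "g k l \<in> hom C (B k l) (B k (l - 1))" using gh k a by simp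
    have pk1: "p k (l - 1) \<in> hom C (B k (l - 1)) (B (Suc k) l)" using ph[of k "l - 1"] k a by simp
    have gs: "g (Suc k) (Suc l) \<in> hom C (B (Suc k) (Suc l)) (B (Suc k) l)"
      using gh[of "Suc k" "Suc l"] k a by simp
    have "ccomp C (g (Suc k) (Suc l)) (ccomp C (p k l) x) = ccomp C (ccomp C (p k (l - 1)) (g k l)) x"
      using assoc[OF x pkl gs, symmetric] rel_gp k a by simp
    also have "\<dots> = zer C T (B (Suc k) l)"
      using assoc[OF x gk pk1] gx comp_zer_r[OF pk1 T] by simp
    finally have gpx: "ccomp C (g (Suc k) (Suc l)) (ccomp C (p k l) x) = zer C T (B (Suc k) l)" .
    show "\<exists>T' e t. e \<in> hom C T' T \<and> is_epi C e \<and> t \<in> hom C T' (B k (Suc l)) \<and>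
           ccomp C x e = ccomp C (g k (Suc l)) t"
    proof (cases "Suc l = n")
      case True
      have px0: "ccomp C (p k l) x = zer C T (B (Suc k) n)"
      proof -
        have "l = n - 1" using True by simp
        then show ?thesis using mono_top[of "Suc k" "ccomp C (p k l) x" T] pxh gpx True k by simp
      qed
      have y: "zer C T (zobj C) \<in> hom C T (YY k (n - Suc l))" using True T zobj_ob unfolding YY_def by auto
      have "ccomp C (dYY k (n - Suc l)) (zer C T (zobj C)) = zer C T (B (Suc k) n)"
        using True comp_zer_r[OF zer_hom[OF zobj_ob Bob[of "Suc k" n]] T] k unfolding dYY_def by simp
      then show ?thesis using cone_ex[OF k a(4) x _ y] gx px0 by simp
    next
      case False
      then have sl: "Suc l < n" using a by simp
      have "Suc n - Suc k = m" "Suc k \<le> Suc n" "0 < Suc l" using a k by auto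
      then obtain T1 e1 y where c1: "e1 \<in> hom C T1 T" "is_epi C e1" "y \<in> hom C T1 (B (Suc k) (Suc (Suc l)))"
        "ccomp C (ccomp C (p k l) x) e1 = ccomp C (g (Suc k) (Suc (Suc l))) y"
        using Suc.IH[rule_format, of "Suc k" "Suc l" "ccomp C (p k l) x" T] pxh gpx sl by auto
      have xe1: "ccomp C x e1 \<in> hom C T1 (B k l)" using x c1 by blast
      have T1: "T1 \<in> Ob C" using hom_ob1[OF c1(1)] .
      have g1: "ccomp C (g k l) (ccomp C x e1) = zer C T1 (B k (l - 1))"
        using assoc[OF c1(1) x gk, symmetric] gx comp_zer_l[OF c1(1)] hom_ob2[OF gk] by simp
      have y': "y \<in> hom C T1 (YY k (n - Suc l))" using c1(3) sl unfolding YY_def by simp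
      have p1: "ccomp C (p k l) (ccomp C x e1) = ccomp C (dYY k (n - Suc l)) y"
        using assoc[OF c1(1) x pkl, symmetric] c1(4) sl unfolding dYY_def by simp
      obtain T2 e2 t where c2: "e2 \<in> hom C T2 T1" "is_epi C e2" "t \<in> hom C T2 (B k (Suc l))"
        "ccomp C (ccomp C x e1) e2 = ccomp C (g k (Suc l)) t"
        using cone_ex[OF k a(4) xe1 _ y' p1] g1 by blast
      have "ccomp C x (ccomp C e1 e2) = ccomp C (g k (Suc l)) t" using assoc[OF c2(1) c1(1) x] c2(4) by simp
      moreover have "ccomp C e1 e2 \<in> hom C T2 T" using c1 c2 by blast
      moreover have "is_epi C (ccomp C e1 e2)" using epi_comp[OF c2(2) c2(1) c1(2) c1(1)] .
      ultimately show ?thesis using c2(3) by blast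
    qed
  qed
qed

lemma Qlem: assumes "k \<le> Suc n" "0 < l" "l < n" "x \<in> hom C T (B k l)"
  "ccomp C (g k l) x = zer C T (B k (l - 1))"
  shows "\<exists>T' e t. e \<in> hom C T' T \<and> is_epi C e \<and> t \<in> hom C T' (B k (Suc l)) \<and>
           ccomp C x e = ccomp C (g k (Suc l)) t"
  using Qlem_aux[of "Suc n - k"] assms by blast

definition "Bt k = (if n = 1 then zobj C else B k 2)"
definition "gt k = (if n = 1 then zer C (zobj C) (B k 1) else g k 2)"

lemma YYBt: "YY k (n - 1) = Bt (Suc k)" "dYY k (n - 1) = gt (Suc k)"
  unfolding YY_def dYY_def Bt_def gt_def using n1 by (auto simp: numeral_2_eq_2 Suc_diff_Suc)

lemma Bt_ob: "k \<le> Suc n \<Longrightarrow> Bt k \<in> Ob C"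
  unfolding Bt_def using zobj_ob Bob[of k 2] n1 by auto

lemma gt_hom: assumes k: "k \<le> Suc n" shows "gt k \<in> hom C (Bt k) (B k 1)"
proof (cases "n = 1")
  case True then show ?thesis unfolding gt_def Bt_def using zer_hom[OF zobj_ob Bob[OF k, of 1]] by simp
next
  case False then show ?thesis unfolding gt_def Bt_def using gh[OF k, of 2] n1 by simp
qed

lemma g1gt: assumes k: "k \<le> Suc n" shows "ccomp C (g k 1) (gt k) = zer C (Bt k) (B k 0)"
proof (cases "n = 1")
  case True then show ?thesis unfolding gt_def Bt_def
    using comp_zer_r[OF gh[OF k, of 1] zobj_ob] n1 by simp
next
  case False then show ?thesis unfolding gt_def Bt_def using gg[OF k, of 1] n1 by (simp add: numeral_2_eq_2)
qed

lemma Q1: assumes k: "k \<le> Suc n" and x: "x \<in> hom C T (B k 1)"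
  and gx: "ccomp C (g k 1) x = zer C T (B k 0)"
  shows "\<exists>T' e y. e \<in> hom C T' T \<and> is_epi C e \<and> y \<in> hom C T' (Bt k) \<and> ccomp C x e = ccomp C (gt k) y"
proof (cases "n = 1")
  case True
  have T: "T \<in> Ob C" using hom_ob1[OF x] .
  have x0: "x = zer C T (B k 1)" using mono_top[OF k, of x T] x gx True by simp
  have y: "zer C T (zobj C) \<in> hom C T (Bt k)" using True T zobj_ob unfolding Bt_def by auto
  have "ccomp C (gt k) (zer C T (zobj C)) = zer C T (B k 1)"
    unfolding gt_def using True comp_zer_r[OF zer_hom[OF zobj_ob Bob[OF k, of 1]] T] n1 by simp
  moreover have "ccomp C x (cid C T) = x" using id_r[OF x] .
  ultimately show ?thesis using id_hom[OF T] id_epi[OF T] y x0 by metis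
next
  case False
  then have "1 < n" using n1 by simp
  then show ?thesis using Qlem[OF k _ _ x] gx unfolding Bt_def gt_def using False
    by (simp add: numeral_2_eq_2)
qed


definition "Rk k = row C (A k) (Bt (Suc k)) (p k 0) (gt (Suc k))"

lemma p0h: "k \<le> n \<Longrightarrow> p k 0 \<in> hom C (A k) (B (Suc k) 1)"
  using ph[of k 0] n1 BA[of k] by simp

lemma g1h: "k \<le> Suc n \<Longrightarrow> g k 1 \<in> hom C (B k 1) (A k)"
  using gh[of k 1] n1 BA[of k] by simp

lemma Rk_hom: "k \<le> n \<Longrightarrow> Rk k \<in> hom C (bobj C (A k) (Bt (Suc k))) (B (Suc k) 1)"
  unfolding Rk_def using row_hom[OF p0h gt_hom] by simp

lemma add_sub: assumes u: "u \<in> hom C X Y" and v: "v \<in> hom C X Y" and w: "w \<in> hom C X Y"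
  and e: "madd C u (mneg C v) = w" shows "u = madd C v w"
proof -
  have nv: "mneg C v \<in> hom C X Y" using v by blast
  have "madd C v w = madd C v (madd C (mneg C v) u)" using e add_comm[OF u nv] by simp
  also have "\<dots> = madd C (madd C v (mneg C v)) u" using add_assoc[OF v nv u] by simp
  also have "\<dots> = u" using add_neg[OF v] zer_add[OF u] by simp
  finally show ?thesis by simp
qed

lemma crit_intro: assumes k: "k \<le> n"
  and H: "\<And>T b. b \<in> hom C T (B (Suc k) 1) \<Longrightarrow> \<exists>T' e a y. e \<in> hom C T' T \<and> is_epi C e \<and>
      a \<in> hom C T' (A k) \<and> y \<in> hom C T' (Bt (Suc k)) \<and>
      ccomp C b e = madd C (ccomp C (p k 0) a) (ccomp C (gt (Suc k)) y)"
  shows "is_epi C (Rk k)"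
proof (rule epi_by_cover[OF Rk_hom[OF k]])
  fix T b assume b: "b \<in> hom C T (B (Suc k) 1)"
  obtain T' e a y where c: "e \<in> hom C T' T" "is_epi C e" "a \<in> hom C T' (A k)" "y \<in> hom C T' (Bt (Suc k))"
      "ccomp C b e = madd C (ccomp C (p k 0) a) (ccomp C (gt (Suc k)) y)" using H[OF b] by blast
  have "ccomp C (Rk k) (col C (A k) (Bt (Suc k)) a y) = ccomp C b e"
    unfolding Rk_def using row_col[OF p0h[OF k] gt_hom[of "Suc k"] c(3) c(4)] c(5) k by simp
  then show "\<exists>T' e' x. e' \<in> hom C T' T \<and> is_epi C e' \<and> x \<in> hom C T' (bobj C (A k) (Bt (Suc k))) \<and>
      ccomp C (Rk k) x = ccomp C b e'" using c col_hom[OF c(3) c(4)] by blast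
qed

lemma crit_dest: assumes k: "k \<le> n" and ep: "is_epi C (Rk k)" and b: "b \<in> hom C T (B (Suc k) 1)"
  shows "\<exists>T' e a y. e \<in> hom C T' T \<and> is_epi C e \<and>
      a \<in> hom C T' (A k) \<and> y \<in> hom C T' (Bt (Suc k)) \<and>
      ccomp C b e = madd C (ccomp C (p k 0) a) (ccomp C (gt (Suc k)) y)"
proof -
  obtain T' e x where c: "e \<in> hom C T' T" "is_epi C e" "x \<in> hom C T' (bobj C (A k) (Bt (Suc k)))"
    "ccomp C (Rk k) x = ccomp C b e" using epi_cover[OF ep Rk_hom[OF k] b] by blast
  have AO: "A k \<in> Ob C" using Aob k by simp
  have BO: "Bt (Suc k) \<in> Ob C" using Bt_ob k by simp
  note s = bs[OF AO BO]
  have "ccomp C b e = madd C (ccomp C (p k 0) (ccomp C (bprj1 C (A k) (Bt (Suc k))) x))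
      (ccomp C (gt (Suc k)) (ccomp C (bprj2 C (A k) (Bt (Suc k))) x))"
    using c(4) row_comp[OF p0h[OF k] gt_hom[of "Suc k"] c(3)] k unfolding Rk_def by simp
  moreover have "ccomp C (bprj1 C (A k) (Bt (Suc k))) x \<in> hom C T' (A k)" using c(3) s by blast
  moreover have "ccomp C (bprj2 C (A k) (Bt (Suc k))) x \<in> hom C T' (Bt (Suc k))" using c(3) s by blast
  ultimately show ?thesis using c(1,2) by blast
qed

lemma fgp: "k \<le> n \<Longrightarrow> ccomp C (g (Suc k) 1) (p k 0) = f k"
  using rel_f by simp

lemma push: assumes k: "k \<le> n" and a: "a \<in> hom C T (A k)" and y: "y \<in> hom C T (Bt (Suc k))"
  shows "ccomp C (g (Suc k) 1) (madd C (ccomp C (p k 0) a) (ccomp C (gt (Suc k)) y)) = ccomp C (f k) a"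
proof -
  have g1: "g (Suc k) 1 \<in> hom C (B (Suc k) 1) (A (Suc k))" using g1h k by simp
  have pa: "ccomp C (p k 0) a \<in> hom C T (B (Suc k) 1)" using a p0h[OF k] by blast
  have gy: "ccomp C (gt (Suc k)) y \<in> hom C T (B (Suc k) 1)" using y gt_hom[of "Suc k"] k by blast
  have "ccomp C (g (Suc k) 1) (madd C (ccomp C (p k 0) a) (ccomp C (gt (Suc k)) y)) =
    madd C (ccomp C (g (Suc k) 1) (ccomp C (p k 0) a)) (ccomp C (g (Suc k) 1) (ccomp C (gt (Suc k)) y))"
    using comp_add_l[OF pa gy g1] .
  also have "ccomp C (g (Suc k) 1) (ccomp C (p k 0) a) = ccomp C (f k) a"
    using assoc[OF a p0h[OF k] g1, symmetric] fgp k by simp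
  also have "ccomp C (g (Suc k) 1) (ccomp C (gt (Suc k)) y) = zer C T (A (Suc k))"
    using assoc[OF y gt_hom[of "Suc k"] g1, symmetric] g1gt[of "Suc k"] k BA[of "Suc k"]
      comp_zer_l[OF y] Aob[of "Suc k"] by simp
  also have "madd C (ccomp C (f k) a) (zer C T (A (Suc k))) = ccomp C (f k) a"
    using add_zer[OF comp_hom[OF a fh[OF k]]] .
  finally show ?thesis .
qed

lemma lift: assumes k: "k \<le> n" and b: "b \<in> hom C T (B (Suc k) 1)"
  and e1: "e1 \<in> hom C T1 T" "is_epi C e1" and a: "a \<in> hom C T1 (A k)"
  and eq: "ccomp C (g (Suc k) 1) (ccomp C b e1) = ccomp C (f k) a"
  shows "\<exists>T' e a y. e \<in> hom C T' T \<and> is_epi C e \<and>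
      a \<in> hom C T' (A k) \<and> y \<in> hom C T' (Bt (Suc k)) \<and>
      ccomp C b e = madd C (ccomp C (p k 0) a) (ccomp C (gt (Suc k)) y)"
proof -
  have g1: "g (Suc k) 1 \<in> hom C (B (Suc k) 1) (A (Suc k))" using g1h k by simp
  have be: "ccomp C b e1 \<in> hom C T1 (B (Suc k) 1)" using b e1 by blast
  have pa: "ccomp C (p k 0) a \<in> hom C T1 (B (Suc k) 1)" using a p0h[OF k] by blast
  define d where "d = madd C (ccomp C b e1) (mneg C (ccomp C (p k 0) a))"
  have dh: "d \<in> hom C T1 (B (Suc k) 1)" unfolding d_def using be pa by blast
  have "ccomp C (g (Suc k) 1) d = madd C (ccomp C (f k) a) (mneg C (ccomp C (f k) a))"
    unfolding d_def using comp_add_l[OF be neg_hom[OF pa] g1] comp_neg_r[OF pa g1] eq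
      assoc[OF a p0h[OF k] g1, symmetric] fgp k by simp
  also have "\<dots> = zer C T1 (B (Suc k) 0)" using add_neg[OF comp_hom[OF a fh[OF k]]] BA[of "Suc k"] k by simp
  finally have gd: "ccomp C (g (Suc k) 1) d = zer C T1 (B (Suc k) 0)" .
  obtain T2 e2 y where c: "e2 \<in> hom C T2 T1" "is_epi C e2" "y \<in> hom C T2 (Bt (Suc k))"
    "ccomp C d e2 = ccomp C (gt (Suc k)) y" using Q1[of "Suc k" d T1] k dh gd by auto
  have gy: "ccomp C (gt (Suc k)) y \<in> hom C T2 (B (Suc k) 1)" using c(3) gt_hom[of "Suc k"] k by blast
  have "madd C (ccomp C b (ccomp C e1 e2)) (mneg C (ccomp C (p k 0) (ccomp C a e2))) = ccomp C (gt (Suc k)) y"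
    using c(4) unfolding d_def
    using comp_add_r[OF c(1) be neg_hom[OF pa]] comp_neg_l[OF c(1) pa]
      assoc[OF c(1) e1(1) b] assoc[OF c(1) a p0h[OF k]] by simp
  then have "ccomp C b (ccomp C e1 e2) = madd C (ccomp C (p k 0) (ccomp C a e2)) (ccomp C (gt (Suc k)) y)"
    using add_sub[OF comp_hom[OF comp_hom[OF c(1) e1(1)] b] comp_hom[OF comp_hom[OF c(1) a] p0h[OF k]] gy]
    by simp
  moreover have "ccomp C e1 e2 \<in> hom C T2 T" using c e1 by blast
  moreover have "is_epi C (ccomp C e1 e2)" using epi_comp[OF c(2) c(1) e1(2) e1(1)] .
  moreover have "ccomp C a e2 \<in> hom C T2 (A k)" using c(1) a by blast
  ultimately show ?thesis using c(3) by blast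
qed

lemma partA: "is_epi C (f n) \<longleftrightarrow> is_epi C (Rk n)"
proof
  assume ep: "is_epi C (f n)"
  show "is_epi C (Rk n)"
  proof (rule crit_intro[OF order_refl])
    fix T b assume b: "b \<in> hom C T (B (Suc n) 1)"
    have g1: "g (Suc n) 1 \<in> hom C (B (Suc n) 1) (A (Suc n))" using g1h by simp
    obtain T1 e1 a where c: "e1 \<in> hom C T1 T" "is_epi C e1" "a \<in> hom C T1 (A n)"
      "ccomp C (f n) a = ccomp C (ccomp C (g (Suc n) 1) b) e1"
      using epi_cover[OF ep fh[of n] comp_hom[OF b g1]] by auto
    show "\<exists>T' e a y. e \<in> hom C T' T \<and> is_epi C e \<and>
      a \<in> hom C T' (A n) \<and> y \<in> hom C T' (Bt (Suc n)) \<and>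
      ccomp C b e = madd C (ccomp C (p n 0) a) (ccomp C (gt (Suc n)) y)"
      using lift[OF order_refl b c(1,2,3)] c(4) assoc[OF c(1) b g1] by simp
  qed
next
  assume ep: "is_epi C (Rk n)"
  show "is_epi C (f n)"
  proof (rule epi_by_cover[OF fh[of n]], simp)
    fix T z assume z: "z \<in> hom C T (A (Suc n))"
    have g1: "g (Suc n) 1 \<in> hom C (B (Suc n) 1) (A (Suc n))" using g1h by simp
    have ge: "is_epi C (g (Suc n) 1)" using hyp_a by blast
    obtain T1 e1 b where c1: "e1 \<in> hom C T1 T" "is_epi C e1" "b \<in> hom C T1 (B (Suc n) 1)"
      "ccomp C (g (Suc n) 1) b = ccomp C z e1" using epi_cover[OF ge g1 z] by blast
    obtain T2 e2 a y where c2: "e2 \<in> hom C T2 T1" "is_epi C e2" "a \<in> hom C T2 (A n)"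
      "y \<in> hom C T2 (Bt (Suc n))" "ccomp C b e2 = madd C (ccomp C (p n 0) a) (ccomp C (gt (Suc n)) y)"
      using crit_dest[OF order_refl ep c1(3)] by blast
    have "ccomp C (f n) a = ccomp C (g (Suc n) 1) (ccomp C b e2)" using push[OF order_refl c2(3,4)] c2(5) by simp
    also have "\<dots> = ccomp C z (ccomp C e1 e2)"
      using assoc[OF c2(1) c1(3) g1, symmetric] c1(4) assoc[OF c2(1) c1(1) z] by simp
    finally have "ccomp C (f n) a = ccomp C z (ccomp C e1 e2)" .
    moreover have "ccomp C e1 e2 \<in> hom C T2 T" using c1 c2 by blast
    moreover have "is_epi C (ccomp C e1 e2)" using epi_comp[OF c2(2) c2(1) c1(2) c1(1)] .
    ultimately show "\<exists>T' e' x. e' \<in> hom C T' T \<and> is_epi C e' \<and> x \<in> hom C T' (A n) \<and>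
        ccomp C (f n) x = ccomp C z e'" using c2(3) by blast
  qed
qed


lemma KER: assumes k: "k < n" and z: "z \<in> hom C T (A (Suc k))"
  and fz: "ccomp C (f (Suc k)) z = zer C T (A (Suc (Suc k)))"
  shows "\<exists>T' e b. e \<in> hom C T' T \<and> is_epi C e \<and> b \<in> hom C T' (B (Suc k) 1) \<and>
     ccomp C z e = ccomp C (g (Suc k) 1) b"
proof -
  have k': "Suc k \<le> n" using k by simp
  have p: "p (Suc k) 0 \<in> hom C (A (Suc k)) (B (Suc (Suc k)) 1)" using p0h[OF k'] .
  have g1: "g (Suc (Suc k)) 1 \<in> hom C (B (Suc (Suc k)) 1) (A (Suc (Suc k)))" using g1h k by simp
  have pz: "ccomp C (p (Suc k) 0) z \<in> hom C T (B (Suc (Suc k)) 1)" using z p by blast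
  have "ccomp C (g (Suc (Suc k)) 1) (ccomp C (p (Suc k) 0) z) = zer C T (B (Suc (Suc k)) 0)"
    using assoc[OF z p g1, symmetric] fgp[OF k'] fz BA[of "Suc (Suc k)"] k by simp
  then obtain T1 e1 y where c1: "e1 \<in> hom C T1 T" "is_epi C e1" "y \<in> hom C T1 (Bt (Suc (Suc k)))"
    "ccomp C (ccomp C (p (Suc k) 0) z) e1 = ccomp C (gt (Suc (Suc k))) y"
    using Q1[of "Suc (Suc k)" "ccomp C (p (Suc k) 0) z" T] pz k by auto
  have ze: "ccomp C z e1 \<in> hom C T1 (B (Suc k) 0)" using z c1(1) BA[of "Suc k"] k by auto
  have y': "y \<in> hom C T1 (YY (Suc k) (n - Suc 0))" using c1(3) YYBt by simp
  have pe: "ccomp C (p (Suc k) 0) (ccomp C z e1) = ccomp C (dYY (Suc k) (n - Suc 0)) y"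
    using assoc[OF c1(1) z p, symmetric] c1(4) YYBt by simp
  obtain T2 e2 t where c2: "e2 \<in> hom C T2 T1" "is_epi C e2" "t \<in> hom C T2 (B (Suc k) (Suc 0))"
    "ccomp C (ccomp C z e1) e2 = ccomp C (g (Suc k) (Suc 0)) t"
    using cone_ex[OF k' _ ze _ y' pe] n1 by auto
  have "ccomp C z (ccomp C e1 e2) = ccomp C (g (Suc k) 1) t" using assoc[OF c2(1) c1(1) z] c2(4) by simp
  moreover have "ccomp C e1 e2 \<in> hom C T2 T" using c1 c2 by blast
  moreover have "is_epi C (ccomp C e1 e2)" using epi_comp[OF c2(2) c2(1) c1(2) c1(1)] .
  ultimately show ?thesis using c2(3) by auto
qed

lemma fg_zero: assumes k: "k < n"
  shows "ccomp C (f (Suc k)) (g (Suc k) 1) = zer C (B (Suc k) 1) (A (Suc (Suc k)))"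
proof -
  have k': "Suc k \<le> n" using k by simp
  have g1: "g (Suc k) 1 \<in> hom C (B (Suc k) 1) (A (Suc k))" using g1h k by simp
  have p: "p (Suc k) 0 \<in> hom C (A (Suc k)) (B (Suc (Suc k)) 1)" using p0h[OF k'] .
  have g2: "g (Suc (Suc k)) 1 \<in> hom C (B (Suc (Suc k)) 1) (A (Suc (Suc k)))" using g1h k by simp
  have "ccomp C (f (Suc k)) (g (Suc k) 1) = ccomp C (g (Suc (Suc k)) 1) (ccomp C (p (Suc k) 0) (g (Suc k) 1))"
    using fgp[OF k'] assoc[OF g1 p g2] by simp
  also have "\<dots> = zer C (B (Suc k) 1) (A (Suc (Suc k)))"
  proof (cases "n = 1")
    case True
    have "ccomp C (p (Suc k) 0) (g (Suc k) 1) = zer C (B (Suc k) 1) (B (Suc (Suc k)) 1)"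
      using rel_0 k' True by auto
    then show ?thesis using comp_zer_r[OF g2] Bob[of "Suc k" 1] k by simp
  next
    case False
    then have n2: "2 \<le> n" using n1 by simp
    have p1: "p (Suc k) 1 \<in> hom C (B (Suc k) 1) (B (Suc (Suc k)) 2)" using ph[of "Suc k" 1] k' n2
      by (simp add: numeral_2_eq_2)
    have g22: "g (Suc (Suc k)) 2 \<in> hom C (B (Suc (Suc k)) 2) (B (Suc (Suc k)) 1)"
      using gh[of "Suc (Suc k)" 2] k n2 by simp
    have "ccomp C (p (Suc k) 0) (g (Suc k) 1) = ccomp C (g (Suc (Suc k)) 2) (p (Suc k) 1)"
      using rel_gp k' n2 by (auto simp: numeral_2_eq_2)
    moreover have "ccomp C (g (Suc (Suc k)) 1) (g (Suc (Suc k)) 2) = zer C (B (Suc (Suc k)) 2) (A (Suc (Suc k)))"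
      using gg[of "Suc (Suc k)" 1] k n2 BA[of "Suc (Suc k)"] by (simp add: numeral_2_eq_2)
    ultimately show ?thesis
      using assoc[OF p1 g22 g2, symmetric] comp_zer_l[OF p1] Aob[of "Suc (Suc k)"] k by simp
  qed
  finally show ?thesis .
qed

lemma partB: assumes k: "k < n" shows "exact C (f k) (f (Suc k)) \<longleftrightarrow> is_epi C (Rk k)"
proof -
  have kn: "k \<le> n" using k by simp
  have k': "Suc k \<le> n" using k by simp
  have fk: "f k \<in> hom C (A k) (A (Suc k))" using fh kn by simp
  have fk1: "f (Suc k) \<in> hom C (A (Suc k)) (A (Suc (Suc k)))" using fh k' by simp
  have g1: "g (Suc k) 1 \<in> hom C (B (Suc k) 1) (A (Suc k))" using g1h k by simp
  have p: "p k 0 \<in> hom C (A k) (B (Suc k) 1)" using p0h[OF kn] .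
  show ?thesis
  proof
    assume ex: "exact C (f k) (f (Suc k))"
    show "is_epi C (Rk k)"
    proof (rule crit_intro[OF kn])
      fix T b assume b: "b \<in> hom C T (B (Suc k) 1)"
      have zh: "ccomp C (g (Suc k) 1) b \<in> hom C T (A (Suc k))" using b g1 by blast
      have "ccomp C (f (Suc k)) (ccomp C (g (Suc k) 1) b) = zer C T (A (Suc (Suc k)))"
        using assoc[OF b g1 fk1, symmetric] fg_zero[OF k] comp_zer_l[OF b] Aob[of "Suc (Suc k)"] k by simp
      then obtain T1 e1 a where c: "e1 \<in> hom C T1 T" "is_epi C e1" "a \<in> hom C T1 (A k)"
        "ccomp C (f k) a = ccomp C (ccomp C (g (Suc k) 1) b) e1"
        using exact_imp[OF ex fk fk1 zh] by blast
      show "\<exists>T' e a y. e \<in> hom C T' T \<and> is_epi C e \<and>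
        a \<in> hom C T' (A k) \<and> y \<in> hom C T' (Bt (Suc k)) \<and>
        ccomp C b e = madd C (ccomp C (p k 0) a) (ccomp C (gt (Suc k)) y)"
        using lift[OF kn b c(1,2,3)] c(4) assoc[OF c(1) b g1] by simp
    qed
  next
    assume ep: "is_epi C (Rk k)"
    show "exact C (f k) (f (Suc k))"
    proof (rule exact_intro[OF fk fk1])
      show "ccomp C (f (Suc k)) (f k) = zer C (A k) (A (Suc (Suc k)))"
        using fgp[OF kn] assoc[OF p g1 fk1] fg_zero[OF k] comp_zer_l[OF p] Aob[of "Suc (Suc k)"] k by simp
    next
      fix T z assume z: "z \<in> hom C T (A (Suc k))" and fz: "ccomp C (f (Suc k)) z = zer C T (A (Suc (Suc k)))"
      obtain T1 e1 b where c1: "e1 \<in> hom C T1 T" "is_epi C e1" "b \<in> hom C T1 (B (Suc k) 1)"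
        "ccomp C z e1 = ccomp C (g (Suc k) 1) b" using KER[OF k z fz] by blast
      obtain T2 e2 a y where c2: "e2 \<in> hom C T2 T1" "is_epi C e2" "a \<in> hom C T2 (A k)"
        "y \<in> hom C T2 (Bt (Suc k))" "ccomp C b e2 = madd C (ccomp C (p k 0) a) (ccomp C (gt (Suc k)) y)"
        using crit_dest[OF kn ep c1(3)] by blast
      have "ccomp C (f k) a = ccomp C (g (Suc k) 1) (ccomp C b e2)" using push[OF kn c2(3,4)] c2(5) by simp
      also have "\<dots> = ccomp C z (ccomp C e1 e2)"
        using assoc[OF c2(1) c1(3) g1, symmetric] c1(4) assoc[OF c2(1) c1(1) z] by simp
      finally have "ccomp C (f k) a = ccomp C z (ccomp C e1 e2)" .
      moreover have "ccomp C e1 e2 \<in> hom C T2 T" using c1 c2 by blast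
      moreover have "is_epi C (ccomp C e1 e2)" using epi_comp[OF c2(2) c2(1) c1(2) c1(1)] .
      ultimately show "\<exists>T' e x. e \<in> hom C T' T \<and> is_epi C e \<and> x \<in> hom C T' (A k) \<and>
          ccomp C (f k) x = ccomp C z e" using c2(3) by blast
    qed
  qed
qed

lemma main: "((\<forall>j\<in>{1..n}. exact C (f (j - 1)) (f j)) \<and> is_epi C (f n)) \<longleftrightarrow>
         (\<forall>k\<le>n. is_epi C (row C (A k) (if n = 1 then zobj C else B (Suc k) 2)
                             (p k 0)
                             (if n = 1 then zer C (zobj C) (B (Suc k) 1) else g (Suc k) 2)))"
proof -
  have R: "\<And>k. row C (A k) (if n = 1 then zobj C else B (Suc k) 2) (p k 0)
      (if n = 1 then zer C (zobj C) (B (Suc k) 1) else g (Suc k) 2) = Rk k"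
    unfolding Rk_def Bt_def gt_def by simp
  have E: "(\<forall>j\<in>{1..n}. exact C (f (j - 1)) (f j)) \<longleftrightarrow> (\<forall>k<n. is_epi C (Rk k))"
  proof
    assume h: "\<forall>j\<in>{1..n}. exact C (f (j - 1)) (f j)"
    show "\<forall>k<n. is_epi C (Rk k)"
    proof (intro allI impI)
      fix k assume k: "k < n"
      have "exact C (f k) (f (Suc k))" using h[rule_format, of "Suc k"] k by simp
      then show "is_epi C (Rk k)" using partB[OF k] by simp
    qed
  next
    assume h: "\<forall>k<n. is_epi C (Rk k)"
    show "\<forall>j\<in>{1..n}. exact C (f (j - 1)) (f j)"
    proof
      fix j assume j: "j \<in> {1..n}"
      then have "j - 1 < n" "Suc (j - 1) = j" by auto
      then show "exact C (f (j - 1)) (f j)" using partB[of "j - 1"] h by metis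
    qed
  qed
  have "(\<forall>k\<le>n. is_epi C (Rk k)) \<longleftrightarrow> (\<forall>k<n. is_epi C (Rk k)) \<and> is_epi C (Rk n)"
    using le_less by auto
  then show ?thesis unfolding R using E partA by simp
qed

end

theorem mainTheorem2:
  fixes C :: "('o, 'm) cat"
    and n :: nat
    and A :: "nat \<Rightarrow> 'o"
    and B :: "nat \<Rightarrow> nat \<Rightarrow> 'o"
    and f :: "nat \<Rightarrow> 'm"
    and g p :: "nat \<Rightarrow> nat \<Rightarrow> 'm"
  assumes abel: "abelian_category C"
    and n1: "n \<ge> 1"
    and objA: "\<forall>k\<le>Suc n. A k \<in> Ob C"
    and objB: "\<forall>k\<le>Suc n. \<forall>l\<in>{1..n}. B k l \<in> Ob C"
    and B0: "\<forall>k\<le>Suc n. B k 0 = A k"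
    and f_hom: "\<forall>k\<le>n. f k \<in> hom C (A k) (A (Suc k))"
    and g_hom: "\<forall>k\<le>Suc n. \<forall>l\<in>{1..n}. g k l \<in> hom C (B k l) (B k (l - 1))"
    and p_hom: "\<forall>k\<le>n. \<forall>l<n. p k l \<in> hom C (B k l) (B (Suc k) (Suc l))"
    and rel_f: "\<forall>k\<le>n. f k = ccomp C (g (Suc k) 1) (p k 0)"
    and rel_gp: "\<forall>k\<le>n. \<forall>l\<in>{1..n - 1}.
                   ccomp C (g (Suc k) (Suc l)) (p k l) = ccomp C (p k (l - 1)) (g k l)"
    and rel_0: "\<forall>k\<le>n. ccomp C (p k (n - 1)) (g k n) = zer C (B k n) (B (Suc k) n)"
    and hyp_a: "is_mono C (g (Suc n) n) \<and>
                (\<forall>l\<in>{1..n - 1}. exact C (g (Suc n) (Suc l)) (g (Suc n) l)) \<and>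
                is_epi C (g (Suc n) 1)"
    and hyp_b: "\<forall>k\<le>n.
       (let X = (\<lambda>j. B k (n - j));
            dX = (\<lambda>j. g k (n - j));
            Y = (\<lambda>j. if j = 0 then zobj C else B (Suc k) (Suc n - j));
            dY = (\<lambda>j. if j = 0 then zer C (zobj C) (B (Suc k) n) else g (Suc k) (Suc n - j));
            h = (\<lambda>j. if j = 0 then zer C (B k n) (zobj C) else p k (n - j))
        in is_mono C (cone_d C n X Y dX dY h 0) \<and>
           (\<forall>j\<in>{1..n}. exact C (cone_d C n X Y dX dY h (j - 1)) (cone_d C n X Y dX dY h j)))"
  shows "((\<forall>j\<in>{1..n}. exact C (f (j - 1)) (f j)) \<and> is_epi C (f n)) \<longleftrightarrow>
         (\<forall>k\<le>n. is_epi C (row C (A k) (if n = 1 then zobj C else B (Suc k) 2)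
                             (p k 0)
                             (if n = 1 then zer C (zobj C) (B (Suc k) 1) else g (Suc k) 2)))"
proof -
  interpret S C n A B f g p
    by (rule S.intro[OF ab.intro[OF abel] S_axioms.intro[OF n1 objA objB B0 f_hom g_hom p_hom
        rel_f rel_gp rel_0 hyp_a hyp_b]])
  show ?thesis by (rule main)
qed

end
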